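(* Fix a positive integer $n$, a nonzero $n$-partition $\lambda$ with $\lambda_n=0$, an $n$-semistandard tableau $T$ of shape $\lambda$, and $w\in S_n^\lambda$. Then $T\in\mathcal{D}_{\lambda,w}$ if and only if $\pi_T\le w$ in the Bruhat order, where $\pi_T$ is the final permutation of the greedy procedure described in the context.
   Context: Let $\lambda=(\lambda_1,\dots,\lambda_n)$ be weakly decreasing nonnegative integers with $\lambda_n=0$, $\lambda\neq0$, identified with its Young diagram. For $1\le j\le\lambda_1$ let $c_j$ be the length of column $j$; let $\zeta_1<\dots<\zeta_d$ be the distinct column lengths, $\zeta_0:=0$, $\zeta_{d+1}:=n$. Write $(j,i)$ for the box in column $j$, row $i$. Reading order: $(l,k)\le(j,i)$ iff $l<j$, or $l=j$ and $k\ge i$; convention $(j,c_j+1)$ means $(j-1,1)$. An $n$-semistandard tableau of shape $\lambda$ has entries in $[n]$, weakly increasing along rows and strictly increasing down columns; $T(j,i)$ denotes its entry, $C_j$ its $j$-th column, $\mathcal{T}_\lambda$ the set of such tableaux. A key is a tableau in which every value of $C_j$ appears in $C_{j-1}$ for $1<j\le\lambda_1$. Permutations are in one-line form. $S_n^\lambda$ is the set of $\phi\in S_n$ with $\phi_{\zeta_{h-1}+1}<\dots<\phi_{\zeta_h}$ for $1\le h\le d+1$. $Y_\lambda(\phi)$ is the key of shape $\lambda$ whose columns of length $\zeta_h$ contain $\phi_1,\dots,\phi_{\zeta_h}$ in increasing order ($1\le h\le d$). For $T\in\mathcal{T}_\lambda$, $R(T)$ denotes the right key of $T$ in the sense of Lascoux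 and Schützenberger. Define $\mathcal{D}_{\lambda,w}:=\{T\in\mathcal{T}_\lambda : R(T)\le Y_\lambda(w)\}$, where $\le$ compares tableaux of the same shape entrywise. Greedy procedure: $\pi^{(1,1)}$ has as first $c_1$ entries the entries of $C_1$ in increasing order, followed by the remaining elements of $[n]$ in increasing order. For locations $(j,i)$ with $j\ge2$, taken in reading order from $(2,c_2)$ to $(\lambda_1,1)$, define $\pi^{(j,i)}$ from $\pi:=\pi^{(j,i+1)}$: if $T(j-1,i)=T(j,i)$ set $\pi^{(j,i)}=\pi$; otherwise let $i_0=i$, and given $i_{x-1}$ with $\pi_{i_{x-1}}<T(j,i)$ let $i_x$ be the smallest index $>c_j$ with $\pi_{i_{x-1}}<\pi_{i_x}\le T(j,i)$, stopping at $i_m$ with $\pi_{i_m}=T(j,i)$; set $\pi^{(j,i)}_{i_x}=\pi_{i_{x-1}}$ ($1\le x\le m$), $\pi^{(j,i)}_{i_0}=\pi_{i_m}$, other entries unchanged. Then $\pi_T:=\pi^{(\lambda_1,1)}$. *)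

theory Defs
  imports Main "HOL-Combinatorics.Permutations"
begin

(* Conventions.
   n :: nat; a partition lambda is given by lam :: nat => nat, with parts lam 1, ..., lam n.
   A tableau is T :: nat => nat => nat, where T j i is the entry in column j, row i
   (both 1-based); only values at boxes of the shape matter. *)

definition is_partition :: "nat \<Rightarrow> (nat \<Rightarrow> nat) \<Rightarrow> bool" where
  "is_partition n lam \<longleftrightarrow>
     (\<forall>i i'. 1 \<le> i \<and> i \<le> i' \<and> i' \<le> n \<longrightarrow> lam i' \<le> lam i) \<and>
     lam n = 0 \<and> (\<exists>i\<in>{1..n}. lam i \<noteq> 0)"

definition col_len :: "nat \<Rightarrow> (nat \<Rightarrow> nat) \<Rightarrow> nat \<Rightarrow> nat" where
  "col_len n lam j = card {i. 1 \<le> i \<and> i \<le> n \<and> j \<le> lam i}"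

definition in_shape :: "nat \<Rightarrow> (nat \<Rightarrow> nat) \<Rightarrow> nat \<Rightarrow> nat \<Rightarrow> bool" where
  "in_shape n lam j i \<longleftrightarrow> 1 \<le> i \<and> i \<le> n \<and> 1 \<le> j \<and> j \<le> lam i"

definition semistandard :: "nat \<Rightarrow> (nat \<Rightarrow> nat) \<Rightarrow> (nat \<Rightarrow> nat \<Rightarrow> nat) \<Rightarrow> bool" where
  "semistandard n lam T \<longleftrightarrow>
     (\<forall>j i. in_shape n lam j i \<longrightarrow> 1 \<le> T j i \<and> T j i \<le> n) \<and>
     (\<forall>j i. in_shape n lam j i \<and> in_shape n lam (Suc j) i \<longrightarrow> T j i \<le> T (Suc j) i) \<and>
     (\<forall>j i. in_shape n lam j i \<and> in_shape n lam j (Suc i) \<longrightarrow> T j i < T j (Suc i))"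

(* S_n^lambda: permutations increasing on each block (zeta_{h-1}, zeta_h];
   the block boundaries zeta_1 < ... < zeta_d are exactly the column lengths *)
definition in_S_lambda :: "nat \<Rightarrow> (nat \<Rightarrow> nat) \<Rightarrow> (nat \<Rightarrow> nat) \<Rightarrow> bool" where
  "in_S_lambda n lam w \<longleftrightarrow> w permutes {1..n} \<and>
     (\<forall>p. 1 \<le> p \<and> p < n \<and> p \<notin> {col_len n lam j | j. 1 \<le> j \<and> j \<le> lam 1}
          \<longrightarrow> w p < w (Suc p))"

definition Y_key :: "nat \<Rightarrow> (nat \<Rightarrow> nat) \<Rightarrow> (nat \<Rightarrow> nat) \<Rightarrow> nat \<Rightarrow> nat \<Rightarrow> nat" where
  "Y_key n lam w j i = sorted_list_of_set (w ` {1..col_len n lam j}) ! (i - 1)"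

definition tab_le :: "nat \<Rightarrow> (nat \<Rightarrow> nat) \<Rightarrow> (nat \<Rightarrow> nat \<Rightarrow> nat) \<Rightarrow> (nat \<Rightarrow> nat \<Rightarrow> nat) \<Rightarrow> bool" where
  "tab_le n lam A B \<longleftrightarrow> (\<forall>j i. in_shape n lam j i \<longrightarrow> A j i \<le> B j i)"

(* ---------- Right key (Lascoux--Schuetzenberger), computed by Willis' scanning method ----------
   Column j of R(T) is obtained from columns j, j+1, ..., lam_1 of T: the entries of column j
   are taken from bottom to top; for each such starting entry x a scanning path is formed:
   in each later column h (left to right) the earliest (in reading order, i.e. bottommost)
   not-yet-scanned entry which is weakly larger than the current entry is appended to the path
   and marked as scanned (if there is none, column h is skipped). The last entry of the path
   is an entry of column j of R(T). *)

definition scan_step :: "nat \<Rightarrow> (nat \<Rightarrow> nat) \<Rightarrow> (nat \<Rightarrow> nat \<Rightarrow> nat)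
    \<Rightarrow> nat \<times> (nat \<times> nat) set \<Rightarrow> nat \<Rightarrow> nat \<times> (nat \<times> nat) set" where
  "scan_step n lam T st h =
     (let cur = fst st; M = snd st;
          Rs = {r. 1 \<le> r \<and> r \<le> col_len n lam h \<and> (h, r) \<notin> M \<and> cur \<le> T h r}
      in if Rs = {} then st else (T h (Max Rs), insert (h, Max Rs) M))"

definition scan_path :: "nat \<Rightarrow> (nat \<Rightarrow> nat) \<Rightarrow> (nat \<Rightarrow> nat \<Rightarrow> nat) \<Rightarrow> nat
    \<Rightarrow> (nat \<times> nat) set \<Rightarrow> nat \<Rightarrow> nat \<times> (nat \<times> nat) set" where
  "scan_path n lam T j M i = fold (\<lambda>h st. scan_step n lam T st h) [Suc j..<Suc (lam 1)] (T j i, M)"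

definition scan_ends :: "nat \<Rightarrow> (nat \<Rightarrow> nat) \<Rightarrow> (nat \<Rightarrow> nat \<Rightarrow> nat) \<Rightarrow> nat \<Rightarrow> nat list" where
  "scan_ends n lam T j =
     fst (fold (\<lambda>i (es, M). let (v, M') = scan_path n lam T j M i in (v # es, M'))
            (rev [1..<Suc (col_len n lam j)]) ([], {}))"

definition right_key :: "nat \<Rightarrow> (nat \<Rightarrow> nat) \<Rightarrow> (nat \<Rightarrow> nat \<Rightarrow> nat) \<Rightarrow> nat \<Rightarrow> nat \<Rightarrow> nat" where
  "right_key n lam T j i = sort (scan_ends n lam T j) ! (i - 1)"

definition D_set :: "nat \<Rightarrow> (nat \<Rightarrow> nat) \<Rightarrow> (nat \<Rightarrow> nat) \<Rightarrow> (nat \<Rightarrow> nat \<Rightarrow> nat) set" where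
  "D_set n lam w = {T. semistandard n lam T \<and> tab_le n lam (right_key n lam T) (Y_key n lam w)}"

(* ---------- Bruhat order on S_n ----------
   reflexive-transitive closure of u < u t, t = (a b) a transposition with l(u t) > l(u),
   i.e. a < b and u a < u b. *)
definition bruhat_cover :: "nat \<Rightarrow> ((nat \<Rightarrow> nat) \<times> (nat \<Rightarrow> nat)) set" where
  "bruhat_cover n = {(u, v). \<exists>a b. 1 \<le> a \<and> a < b \<and> b \<le> n \<and> u a < u b \<and>
                               v = u(a := u b, b := u a)}"

definition bruhat_le :: "nat \<Rightarrow> (nat \<Rightarrow> nat) \<Rightarrow> (nat \<Rightarrow> nat) \<Rightarrow> bool" where
  "bruhat_le n u v \<longleftrightarrow> u permutes {1..n} \<and> v permutes {1..n} \<and> (u, v) \<in> (bruhat_cover n)\<^sup>*"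

definition pi_init :: "nat \<Rightarrow> (nat \<Rightarrow> nat) \<Rightarrow> (nat \<Rightarrow> nat \<Rightarrow> nat) \<Rightarrow> nat \<Rightarrow> nat" where
  "pi_init n lam T p =
     (let c1 = col_len n lam 1;
          rest = sorted_list_of_set ({1..n} - T 1 ` {1..c1})
      in if p < 1 \<or> n < p then p else if p \<le> c1 then T 1 p else rest ! (p - c1 - 1))"

(* the index sequence i_0, i_1, ..., i_m (fuel bounds the length) *)
fun greedy_chain :: "nat \<Rightarrow> (nat \<Rightarrow> nat) \<Rightarrow> nat \<Rightarrow> nat \<Rightarrow> nat \<Rightarrow> nat \<Rightarrow> nat list" where
  "greedy_chain n pi c t k 0 = [k]"
| "greedy_chain n pi c t k (Suc f) =
     (if pi k = t then [k]
      else k # greedy_chain n pi c t (LEAST l. c < l \<and> l \<le> n \<and> pi k < pi l \<and> pi l \<le> t) f)"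

(* pi'_{i_x} = pi_{i_{x-1}} (1 <= x <= m), pi'_{i_0} = pi_{i_m} *)
definition cyc_update :: "(nat \<Rightarrow> nat) \<Rightarrow> nat list \<Rightarrow> nat \<Rightarrow> nat" where
  "cyc_update pi ks = (fold (\<lambda>(a, b) f. f(b := pi a)) (zip ks (tl ks)) pi)(hd ks := pi (last ks))"

definition greedy_step :: "nat \<Rightarrow> (nat \<Rightarrow> nat) \<Rightarrow> (nat \<Rightarrow> nat \<Rightarrow> nat)
    \<Rightarrow> (nat \<Rightarrow> nat) \<Rightarrow> nat \<times> nat \<Rightarrow> nat \<Rightarrow> nat" where
  "greedy_step n lam T pi loc =
     (let j = fst loc; i = snd loc in
      if T (j - 1) i = T j i then pi
      else cyc_update pi (greedy_chain n pi (col_len n lam j) (T j i) i n))"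

definition greedy_locs :: "nat \<Rightarrow> (nat \<Rightarrow> nat) \<Rightarrow> (nat \<times> nat) list" where
  "greedy_locs n lam = concat (map (\<lambda>j. map (\<lambda>i. (j, i)) (rev [1..<Suc (col_len n lam j)]))
                                  [2..<Suc (lam 1)])"

definition pi_T :: "nat \<Rightarrow> (nat \<Rightarrow> nat) \<Rightarrow> (nat \<Rightarrow> nat \<Rightarrow> nat) \<Rightarrow> nat \<Rightarrow> nat" where
  "pi_T n lam T = fold (\<lambda>loc pi. greedy_step n lam T pi loc) (greedy_locs n lam) (pi_init n lam T)"

end

theory Submission
  imports Defs
begin


definition N :: "(nat \<Rightarrow> nat) \<Rightarrow> nat \<Rightarrow> nat \<Rightarrow> nat" where
  "N u k x = card {p \<in> {1..k}. u p \<le> x}"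

definition cnt :: "nat set \<Rightarrow> nat \<Rightarrow> nat" where
  "cnt A x = card {a \<in> A. a \<le> x}"

lemma cnt_image: "inj_on u {1..k} \<Longrightarrow> cnt (u ` {1..k}) x = N u k x"
proof -
  assume inj: "inj_on u {1..k}"
  have "{a \<in> u ` {1..k}. a \<le> x} = u ` {p \<in> {1..k}. u p \<le> x}" by auto
  moreover have "inj_on u {p \<in> {1..k}. u p \<le> x}" using inj by (rule inj_on_subset) auto
  ultimately show ?thesis unfolding cnt_def N_def by (simp add: card_image)
qed

lemma sorted_nth_le_iff:
  fixes A :: "nat set"
  assumes "finite A" "i < card A"
  shows "sorted_list_of_set A ! i \<le> x \<longleftrightarrow> i < cnt A x"
proof -
  let ?s = "sorted_list_of_set A"
  have len: "length ?s = card A" by simp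
  have st: "sorted_wrt (<) ?s" by simp
  have setS: "set ?s = A" using assms by simp
  have mono: "\<And>j k. j < k \<Longrightarrow> k < length ?s \<Longrightarrow> ?s ! j < ?s ! k"
    using st sorted_wrt_nth_less by blast
  have dist: "distinct ?s" by simp
  show ?thesis
  proof
    assume le: "?s ! i \<le> x"
    have sub: "(\<lambda>j. ?s ! j) ` {..i} \<subseteq> {a \<in> A. a \<le> x}"
    proof
      fix y assume "y \<in> (\<lambda>j. ?s ! j) ` {..i}"
      then obtain j where j: "j \<le> i" "y = ?s ! j" by auto
      have "?s ! j \<le> ?s ! i" using mono[of j i] j assms len by (cases "j = i") auto
      then show "y \<in> {a \<in> A. a \<le> x}" using j le setS assms len
        by (metis (mono_tags, lifting) dual_order.trans le_less_trans mem_Collect_eq nth_mem)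
    qed
    have inj: "inj_on (\<lambda>j. ?s ! j) {..i}"
      using dist assms len by (auto simp: inj_on_def nth_eq_iff_index_eq)
    have "card ((\<lambda>j. ?s ! j) ` {..i}) = Suc i" using inj by (simp add: card_image)
    moreover have "card ((\<lambda>j. ?s ! j) ` {..i}) \<le> cnt A x"
      unfolding cnt_def using sub assms by (intro card_mono) auto
    ultimately show "i < cnt A x" by simp
  next
    assume lt: "i < cnt A x"
    show "?s ! i \<le> x"
    proof (rule ccontr)
      assume "\<not> ?s ! i \<le> x"
      then have gt: "x < ?s ! i" by simp
      have "{a \<in> A. a \<le> x} \<subseteq> (\<lambda>j. ?s ! j) ` {..<i}"
      proof
        fix y assume y: "y \<in> {a \<in> A. a \<le> x}"
        then obtain j where j: "j < length ?s" "y = ?s ! j" using setS by (metis (no_types, lifting) in_set_conv_nth mem_Collect_eq)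
        have "j < i"
        proof (rule ccontr)
          assume "\<not> j < i"
          then have "?s ! i \<le> ?s ! j" using mono[of i j] j by (cases "i = j") auto
          then show False using y j gt by auto
        qed
        then show "y \<in> (\<lambda>j. ?s ! j) ` {..<i}" using j by auto
      qed
      then have "cnt A x \<le> card ((\<lambda>j. ?s ! j) ` {..<i})" unfolding cnt_def
        by (intro card_mono) auto
      also have "\<dots> \<le> i" using card_image_le[of "{..<i}" "\<lambda>j. ?s ! j"] by simp
      finally show False using lt by simp
    qed
  qed
qed

definition domi :: "nat set \<Rightarrow> nat set \<Rightarrow> bool" where
  "domi A B \<longleftrightarrow> (\<forall>x. cnt B x \<le> cnt A x)"

lemma sorted_le_iff_domi:
  fixes A B :: "nat set"
  assumes "finite A" "finite B" "card A = card B"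
  shows "(\<forall>i < card A. sorted_list_of_set A ! i \<le> sorted_list_of_set B ! i) \<longleftrightarrow> domi A B"
proof
  assume H: "\<forall>i < card A. sorted_list_of_set A ! i \<le> sorted_list_of_set B ! i"
  show "domi A B" unfolding domi_def
  proof
    fix x
    show "cnt B x \<le> cnt A x"
    proof (cases "cnt B x = 0")
      case True then show ?thesis by simp
    next
      case False
      have cb: "cnt B x \<le> card B" unfolding cnt_def using assms by (intro card_mono) auto
      let ?i = "cnt B x - 1"
      have i: "?i < card B" using False cb by simp
      have "sorted_list_of_set B ! ?i \<le> x" using sorted_nth_le_iff[OF assms(2) i] False by simp
      then have "sorted_list_of_set A ! ?i \<le> x" using H i assms(3) by (metis le_trans)
      then have "?i < cnt A x" using sorted_nth_le_iff[OF assms(1)] i assms(3) by simp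
      then show ?thesis by simp
    qed
  qed
next
  assume D: "domi A B"
  show "\<forall>i < card A. sorted_list_of_set A ! i \<le> sorted_list_of_set B ! i"
  proof (intro allI impI)
    fix i assume i: "i < card A"
    let ?x = "sorted_list_of_set B ! i"
    have iB: "i < card B" using i assms(3) by simp
    have "i < cnt B ?x" using sorted_nth_le_iff[OF assms(2) iB, of ?x] by simp
    then have "i < cnt A ?x" using D unfolding domi_def by (meson le_trans not_le)
    then show "sorted_list_of_set A ! i \<le> ?x" using sorted_nth_le_iff[OF assms(1) i] by simp
  qed
qed


lemma N_Suc: "N u (Suc k) x = N u k x + (if u (Suc k) \<le> x then 1 else 0)"
proof -
  have "{p \<in> {1..Suc k}. u p \<le> x} = {p \<in> {1..k}. u p \<le> x} \<union> (if u (Suc k) \<le> x then {Suc k} else {})"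
    by (auto simp: le_Suc_eq)
  then show ?thesis unfolding N_def by (auto simp: card_insert_if)
qed

lemma N_0[simp]: "N u 0 x = 0" unfolding N_def by simp

lemma N_cong: "(\<And>p. 1 \<le> p \<Longrightarrow> p \<le> k \<Longrightarrow> u p = w p) \<Longrightarrow> N u k x = N w k x"
  unfolding N_def by (intro arg_cong[where f=card]) auto

lemma N_mono_x: "x \<le> y \<Longrightarrow> N u k x \<le> N u k y"
  unfolding N_def by (intro card_mono) auto

definition R :: "(nat \<Rightarrow> nat) \<Rightarrow> nat \<Rightarrow> nat \<Rightarrow> nat \<Rightarrow> nat" where
  "R u a k x = card {p \<in> {Suc a..k}. u p \<le> x}"

lemma N_split: "a \<le> k \<Longrightarrow> N u k x = N u a x + R u a k x"
proof (induction k)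
  case 0 then show ?case by (simp add: R_def)
next
  case (Suc k)
  show ?case
  proof (cases "a = Suc k")
    case True then show ?thesis by (simp add: R_def)
  next
    case False
    then have ak: "a \<le> k" using Suc by simp
    have "{p \<in> {Suc a..Suc k}. u p \<le> x} = {p \<in> {Suc a..k}. u p \<le> x} \<union> (if u (Suc k) \<le> x then {Suc k} else {})"
      using ak by (auto simp: le_Suc_eq)
    then have "R u a (Suc k) x = R u a k x + (if u (Suc k) \<le> x then 1 else 0)"
      unfolding R_def by (auto simp: card_insert_if)
    then show ?thesis using Suc.IH[OF ak] N_Suc[of u k x] by simp
  qed
qed

lemma R_mono_x: "x \<le> y \<Longrightarrow> R u a k x \<le> R u a k y"
  unfolding R_def by (intro card_mono) auto

lemma swap_sum:
  fixes f :: "nat \<Rightarrow> nat" and k :: nat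
  assumes "1 \<le> a" "a < b" "v = u(a := u b, b := u a)"
  shows "(\<Sum>p\<in>{1..k}. f (v p)) + (if a \<le> k \<and> k < b then f (u a) else 0)
       = (\<Sum>p\<in>{1..k}. f (u p)) + (if a \<le> k \<and> k < b then f (u b) else 0)"
proof (induction k)
  case 0 then show ?case using assms by simp
next
  case (Suc k)
  have s: "(\<Sum>p\<in>{1..Suc k}. g p) = (\<Sum>p\<in>{1..k}. g p) + g (Suc k)" for g :: "nat \<Rightarrow> nat"
    by (simp add: add.commute)
  have vS: "v (Suc k) = (if Suc k = a then u b else if Suc k = b then u a else u (Suc k))"
    using assms by auto
  consider "Suc k < a" | "Suc k = a" | "a < Suc k \<and> Suc k < b" | "Suc k = b" | "b < Suc k"
    by linarith
  then show ?case
  proof cases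
    case 1 then show ?thesis unfolding s using Suc.IH vS assms(1,2) by auto
  next
    case 2 then show ?thesis unfolding s using Suc.IH vS assms(2) by auto
  next
    case 3 then show ?thesis unfolding s using Suc.IH vS assms(1,2) by auto
  next
    case 4 then show ?thesis unfolding s using Suc.IH vS assms(2) by auto
  next
    case 5 then show ?thesis unfolding s using Suc.IH vS assms(1,2) by auto
  qed
qed

lemma N_sum: "N u k x = (\<Sum>p\<in>{1..k}. (if u p \<le> x then 1 else 0))"
proof -
  have "{p\<in>{1..k}. u p \<le> x} = {1..k} \<inter> {p. u p \<le> x}" by auto
  then show ?thesis unfolding N_def by (simp add: sum.If_cases)
qed

lemma N_swap:
  assumes "1 \<le> a" "a < b" "v = u(a := u b, b := u a)"
  shows "N v k x + (if a \<le> k \<and> k < b then (if u a \<le> x then 1 else 0) else 0)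
       = N u k x + (if a \<le> k \<and> k < b then (if u b \<le> x then 1 else 0) else 0)"
  unfolding N_sum using swap_sum[OF assms, of "\<lambda>y. if y \<le> x then 1 else 0" k] by simp

lemma cover_permutes:
  assumes "(u, v) \<in> bruhat_cover n" "u permutes {1..n}"
  shows "v permutes {1..n}"
proof -
  obtain a b where ab: "1 \<le> a" "a < b" "b \<le> n" "u a < u b" "v = u(a := u b, b := u a)"
    using assms(1) unfolding bruhat_cover_def by auto
  have "v = u \<circ> transpose a b" using ab by (auto simp: fun_eq_iff transpose_def)
  moreover have "transpose a b permutes {1..n}" using ab by (intro permutes_swap_id) auto
  ultimately show ?thesis using assms(2) permutes_compose by blast
qed

lemma N_cover:
  assumes "(u, v) \<in> bruhat_cover n"
  shows "N v k x \<le> N u k x"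
proof -
  obtain a b where ab: "1 \<le> a" "a < b" "b \<le> n" "u a < u b" "v = u(a := u b, b := u a)"
    using assms(1) unfolding bruhat_cover_def by auto
  have sw: "N v k x + (if a \<le> k \<and> k < b then (if u a \<le> x then 1 else 0) else 0)
       = N u k x + (if a \<le> k \<and> k < b then (if u b \<le> x then 1 else 0) else 0)"
    using N_swap[OF ab(1,2,5), of k x] .
  show ?thesis
  proof (cases "a \<le> k \<and> k < b")
    case True
    have "(if u b \<le> x then 1 else 0) \<le> (if u a \<le> x then (1::nat) else 0)" using ab(4) by auto
    then show ?thesis using sw True by simp
  next
    case False
    from sw have "N v k x + 0 = N u k x + 0" unfolding if_not_P[OF False] .
    then show ?thesis by simp
  qed
qed

lemma N_rtrancl:
  assumes "(u, w) \<in> (bruhat_cover n)\<^sup>*"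
  shows "N w k x \<le> N u k x"
  using assms
proof (induction rule: rtrancl_induct)
  case base then show ?case by simp
next
  case (step y z) then show ?case using N_cover[OF step(2), of k x] by simp
qed

lemma rtrancl_permutes:
  assumes "(u, w) \<in> (bruhat_cover n)\<^sup>*" "u permutes {1..n}"
  shows "w permutes {1..n}"
  using assms
  by (induction rule: rtrancl_induct) (simp, metis cover_permutes)

definition mu :: "nat \<Rightarrow> (nat \<Rightarrow> nat) \<Rightarrow> nat" where
  "mu n u = (\<Sum>k\<in>{1..n}. \<Sum>p\<in>{1..k}. u p)"

lemma mu_bound:
  assumes "u permutes {1..n}"
  shows "mu n u \<le> n * n * n"
proof -
  have "(\<Sum>p\<in>{1..k}. u p) \<le> n * n" if "k \<in> {1..n}" for k
  proof -
    have "(\<Sum>p\<in>{1..k}. u p) \<le> (\<Sum>p\<in>{1..k}. n)"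
      using that assms by (intro sum_mono) (auto dest: permutes_in_image)
    also have "\<dots> = k * n" by simp
    also have "\<dots> \<le> n * n" using that by simp
    finally show ?thesis .
  qed
  then have "mu n u \<le> (\<Sum>k\<in>{1..n}. n * n)" unfolding mu_def by (intro sum_mono) auto
  also have "\<dots> = n * n * n" by simp
  finally show ?thesis .
qed

lemma ehresmann:
  assumes "w permutes {1..n}"
  shows "u permutes {1..n} \<Longrightarrow> (\<forall>k x. k \<le> n \<longrightarrow> N w k x \<le> N u k x) \<Longrightarrow> (u, w) \<in> (bruhat_cover n)\<^sup>*"
proof (induction u rule: measure_induct_rule[where f = "\<lambda>u. n * n * n - mu n u"])
  case (less u)
  note up = less.prems(1) and D = less.prems(2)
  show ?case
  proof (cases "u = w")
    case True then show ?thesis by simp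
  next
    case False
    then obtain p0 where p0: "u p0 \<noteq> w p0" by auto
    define a where "a = (LEAST p. u p \<noteq> w p)"
    have ua: "u a \<noteq> w a" unfolding a_def using p0 by (rule LeastI)
    have below: "\<And>p. p < a \<Longrightarrow> u p = w p" unfolding a_def using not_less_Least by blast
    have a_in: "a \<in> {1..n}"
    proof (rule ccontr)
      assume "a \<notin> {1..n}"
      then have "u a = a" "w a = a" using up assms permutes_not_in by fastforce+
      then show False using ua by simp
    qed
    then obtain a' where a': "a = Suc a'" by (cases a) auto
    have agree: "N u a' x = N w a' x" for x using below a' by (intro N_cong) auto
    have uwa: "u a < w a"
    proof (rule ccontr)
      assume "\<not> u a < w a"
      then have "w a < u a" using ua by simp
      then have "N u a (w a) < N w a (w a)"
        using N_Suc[of u a' "w a"] N_Suc[of w a' "w a"] agree a' by simp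
      then show False using D[rule_format, of a "w a"] a_in by simp
    qed
    have wan: "w a \<in> {1..n}" using permutes_in_image[OF assms] a_in by blast
    obtain b' where b': "b' \<in> {1..n}" "u b' = w a"
      using wan permutes_image[OF up] by (metis imageE)
    have "a < b'"
    proof (rule ccontr)
      assume "\<not> a < b'"
      moreover have "b' \<noteq> a" using b' ua by auto
      ultimately have "b' < a" by simp
      then have "w b' = w a" using below b' by simp
      then have "b' = a" using permutes_inj[OF assms] by (metis injD)
      then show False using \<open>b' \<noteq> a\<close> by simp
    qed
    define P where "P p \<longleftrightarrow> a < p \<and> p \<le> n \<and> u a < u p \<and> u p \<le> w a" for p
    have Pb': "P b'" unfolding P_def using \<open>a < b'\<close> b' uwa by auto
    define b where "b = (LEAST p. P p)"
    have Pb: "P b" unfolding b_def using Pb' by (rule LeastI)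
    have notP: "\<And>p. p < b \<Longrightarrow> \<not> P p" unfolding b_def using not_less_Least by blast
    have ab: "a < b" "b \<le> n" "u a < u b" "u b \<le> w a" using Pb unfolding P_def by auto
    define v where "v = u(a := u b, b := u a)"
    have cov: "(u, v) \<in> bruhat_cover n"
      unfolding bruhat_cover_def v_def using ab a_in by auto
    have vp: "v permutes {1..n}" using cover_permutes[OF cov up] .
    have sums: "(\<Sum>p\<in>{1..k}. v p) + (if a \<le> k \<and> k < b then u a else 0)
       = (\<Sum>p\<in>{1..k}. u p) + (if a \<le> k \<and> k < b then u b else 0)" for k
      using swap_sum[of a b v u "\<lambda>y. y" k] a_in ab v_def by simp
    have "mu n u < mu n v"
      unfolding mu_def
    proof (rule sum_strict_mono_ex1)
      show "finite {1..n}" by simp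
      show "\<forall>k\<in>{1..n}. (\<Sum>p\<in>{1..k}. u p) \<le> (\<Sum>p\<in>{1..k}. v p)"
      proof
        fix k assume "k \<in> {1..n}"
        show "(\<Sum>p\<in>{1..k}. u p) \<le> (\<Sum>p\<in>{1..k}. v p)"
          using sums[of k] ab(3) by (cases "a \<le> k \<and> k < b") auto
      qed
      show "\<exists>k\<in>{1..n}. (\<Sum>p\<in>{1..k}. u p) < (\<Sum>p\<in>{1..k}. v p)"
        using sums[of a] ab a_in by (intro bexI[of _ a]) auto
    qed
    moreover have "mu n v \<le> n * n * n" using mu_bound[OF vp] .
    ultimately have meas: "n * n * n - mu n v < n * n * n - mu n u" by simp
    have Dv: "\<forall>k x. k \<le> n \<longrightarrow> N w k x \<le> N v k x"
    proof (intro allI impI)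
      fix k x assume kn: "k \<le> n"
      have sw: "N v k x + (if a \<le> k \<and> k < b then (if u a \<le> x then 1 else 0) else 0)
           = N u k x + (if a \<le> k \<and> k < b then (if u b \<le> x then 1 else 0) else 0)"
        using N_swap[of a b v u k x] a_in ab v_def by simp
      show "N w k x \<le> N v k x"
      proof (cases "a \<le> k \<and> k < b \<and> u a \<le> x \<and> x < u b")
        case False
        have "N v k x = N u k x"
        proof (cases "a \<le> k \<and> k < b")
          case True
          then have "\<not> (u a \<le> x \<and> x < u b)" using False by simp
          then have "(if u a \<le> x then 1 else 0) = (if u b \<le> x then (1::nat) else 0)" using ab(3) by auto
          then show ?thesis using sw True by simp
        next
          case False
          from sw have "N v k x + 0 = N u k x + 0" unfolding if_not_P[OF False] .
          then show ?thesis by simp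
        qed
        then show ?thesis using D kn by simp
      next
        case True
        then have ak: "a \<le> k" "k < b" and x: "u a \<le> x" "x < u b" by auto
        have Ru: "R u a k x = R u a k (w a)"
          unfolding R_def
        proof (intro arg_cong[where f = card] Collect_cong)
          fix p
          show "(p \<in> {Suc a..k} \<and> u p \<le> x) = (p \<in> {Suc a..k} \<and> u p \<le> w a)"
          proof (cases "p \<in> {Suc a..k}")
            case True
            then have "\<not> P p" using notP ak by auto
            then have "\<not> (u a < u p \<and> u p \<le> w a)" unfolding P_def using True kn ak by auto
            then show ?thesis using x ab by auto
          qed auto
        qed
        have Nwa: "N w a (w a) = N w a' (w a) + 1" using N_Suc[of w a' "w a"] a' by simp
        have Nua: "N u a (w a) = N u a' (w a) + 1" using N_Suc[of u a' "w a"] a' uwa by simp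
        have "N w k (w a) \<le> N u k (w a)" using D kn by simp
        then have Rw: "R w a k (w a) \<le> R u a k (w a)"
          using N_split[OF ak(1), of w "w a"] N_split[OF ak(1), of u "w a"] Nwa Nua agree by simp
        have xw: "x < w a" using x ab by simp
        have "N w k x = N w a' x + R w a k x"
          using N_split[OF ak(1), of w x] N_Suc[of w a' x] a' xw by simp
        also have "\<dots> \<le> N u a' x + R u a k x"
          using agree[of x] R_mono_x[of x "w a" w a k] xw Rw Ru by simp
        also have "\<dots> + 1 = N u k x"
          using N_split[OF ak(1), of u x] N_Suc[of u a' x] a' x by simp
        finally show ?thesis using sw True by simp
      qed
    qed
    have "(v, w) \<in> (bruhat_cover n)\<^sup>*" using less.IH[OF meas vp Dv] .
    then show ?thesis using cov by (meson converse_rtrancl_into_rtrancl)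
  qed
qed


lemma strict_on_interval:
  fixes u :: "nat \<Rightarrow> nat"
  assumes "\<forall>p. l < p \<and> p < r \<longrightarrow> u p < u (Suc p)"
  shows "l < p \<Longrightarrow> p < q \<Longrightarrow> q \<le> r \<Longrightarrow> u p < u q"
proof (induction q)
  case 0 then show ?case by simp
next
  case (Suc q)
  show ?case
  proof (cases "p = q")
    case True then show ?thesis using assms Suc.prems by auto
  next
    case False
    then have "u p < u q" using Suc by simp
    also have "u q < u (Suc q)" using assms Suc.prems False by auto
    finally show ?thesis .
  qed
qed

lemma R_block:
  assumes inc: "\<forall>p. l < p \<and> p < r \<longrightarrow> u p < u (Suc p)" and lk: "l \<le> k" and kr: "k \<le> r"
  shows "R u l k x = min (k - l) (R u l r x)"
proof -
  define D where "D = {p \<in> {Suc l..r}. u p \<le> x}"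
  have fin: "finite D" unfolding D_def by simp
  show ?thesis
  proof (cases "D = {}")
    case True
    then have e1: "{p \<in> {Suc l..k}. u p \<le> x} = {}" unfolding D_def using kr by auto
    have e2: "{p \<in> {Suc l..r}. u p \<le> x} = {}" using True unfolding D_def .
    show ?thesis unfolding R_def by (simp only: e1 e2) simp
  next
    case False
    define q where "q = Max D"
    have qD: "q \<in> D" unfolding q_def using fin False by simp
    have Deq: "D = {Suc l..q}"
    proof
      show "D \<subseteq> {Suc l..q}"
      proof
        fix p assume pD: "p \<in> D"
        have "p \<le> q" unfolding q_def using fin pD by simp
        moreover have "Suc l \<le> p" using pD unfolding D_def by simp
        ultimately show "p \<in> {Suc l..q}" by simp
      qed
      show "{Suc l..q} \<subseteq> D"
      proof
        fix p assume p: "p \<in> {Suc l..q}"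
        have "u p \<le> u q"
        proof (cases "p = q")
          case False
          then have "u p < u q" using strict_on_interval[OF inc, of p q] p qD unfolding D_def by auto
          then show ?thesis by simp
        qed simp
        then show "p \<in> D" using qD p unfolding D_def by auto
      qed
    qed
    have qr: "q \<le> r" using qD unfolding D_def by simp
    have Dm: "\<And>p. p \<in> {Suc l..r} \<Longrightarrow> u p \<le> x \<longleftrightarrow> p \<le> q"
    proof -
      fix p assume p: "p \<in> {Suc l..r}"
      have "p \<in> D \<longleftrightarrow> p \<in> {Suc l..q}" using Deq by simp
      then show "u p \<le> x \<longleftrightarrow> p \<le> q" using p unfolding D_def by auto
    qed
    have "{p \<in> {Suc l..k}. u p \<le> x} = {Suc l..min k q}"
    proof (intro set_eqI iffI)
      fix p assume "p \<in> {p \<in> {Suc l..k}. u p \<le> x}"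
      then show "p \<in> {Suc l..min k q}" using Dm[of p] kr by auto
    next
      fix p assume "p \<in> {Suc l..min k q}"
      then show "p \<in> {p \<in> {Suc l..k}. u p \<le> x}" using Dm[of p] kr qr by auto
    qed
    then have "R u l k x = min k q - l" unfolding R_def by simp
    moreover have "R u l r x = q - l" unfolding R_def using Deq unfolding D_def by simp
    ultimately show ?thesis by simp
  qed
qed

lemma N_block:
  assumes inc: "\<forall>p. l < p \<and> p < r \<longrightarrow> u p < u (Suc p)" and lk: "l \<le> k" and kr: "k \<le> r"
  shows "N u k x = min (N u l x + (k - l)) (N u r x)"
  using N_split[OF lk, of u x] N_split[of l r u x] lk kr R_block[OF inc lk kr, of x] by simp

lemma N_block_dom:
  assumes "\<forall>p. l < p \<and> p < r \<longrightarrow> u p < u (Suc p)" "\<forall>p. l < p \<and> p < r \<longrightarrow> w p < w (Suc p)"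
    "l \<le> k" "k \<le> r" "N w l x \<le> N u l x" "N w r x \<le> N u r x"
  shows "N w k x \<le> N u k x"
  using N_block[OF assms(1,3,4), of x] N_block[OF assms(2,3,4), of x] assms(5,6) by (auto simp: min_def)

definition incr_off :: "nat \<Rightarrow> (nat \<Rightarrow> nat) \<Rightarrow> (nat \<Rightarrow> nat) \<Rightarrow> bool" where
  "incr_off n lam u \<longleftrightarrow> (\<forall>p. 1 \<le> p \<and> p < n \<and> p \<notin> {col_len n lam j | j. 1 \<le> j \<and> j \<le> lam 1}
          \<longrightarrow> u p < u (Suc p))"

lemma N_full:
  assumes "u permutes {1..n}"
  shows "N u n x = card {y \<in> {1..n}. y \<le> x}"
proof -
  have "cnt (u ` {1..n}) x = N u n x" using permutes_inj_on[OF assms] by (rule cnt_image)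
  then show ?thesis unfolding cnt_def using permutes_image[OF assms] by simp
qed

lemma col_len_le: "col_len n lam j \<le> n"
proof -
  have "col_len n lam j \<le> card {1..n}" unfolding col_len_def by (intro card_mono) auto
  then show ?thesis by simp
qed

lemma dom_all:
  assumes up: "u permutes {1..n}" and wp: "w permutes {1..n}"
    and iu: "incr_off n lam u" and iw: "incr_off n lam w"
    and D: "\<forall>j x. 1 \<le> j \<and> j \<le> lam 1 \<longrightarrow> N w (col_len n lam j) x \<le> N u (col_len n lam j) x"
  shows "\<forall>k x. k \<le> n \<longrightarrow> N w k x \<le> N u k x"
proof (intro allI impI)
  fix k x assume kn: "k \<le> n"
  define CL where "CL = {col_len n lam j | j. 1 \<le> j \<and> j \<le> lam 1}"
  define Z where "Z = {0, n} \<union> CL"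
  have CLfin: "finite CL" unfolding CL_def by simp
  have Zfin: "finite Z" unfolding Z_def using CLfin by simp
  have Zdom: "N w z x \<le> N u z x" if zZ: "z \<in> Z" for z
  proof -
    consider "z = 0" | "z = n" | "z \<in> CL" using zZ unfolding Z_def by blast
    then show ?thesis
    proof cases
      case 1 then show ?thesis by simp
    next
      case 2 then show ?thesis using N_full[OF up] N_full[OF wp] by simp
    next
      case 3
      then obtain j where j: "1 \<le> j" "j \<le> lam 1" "z = col_len n lam j" unfolding CL_def by blast
      show ?thesis using D j by simp
    qed
  qed
  define l where "l = Max {z \<in> Z. z \<le> k}"
  define r where "r = Min {z \<in> Z. k \<le> z}"
  have lZ: "l \<in> {z \<in> Z. z \<le> k}" unfolding l_def using Zfin by (intro Max_in) (auto simp: Z_def)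
  have rZ: "r \<in> {z \<in> Z. k \<le> z}" unfolding r_def using Zfin kn by (intro Min_in) (auto simp: Z_def)
  have lmax: "\<And>z. z \<in> Z \<Longrightarrow> z \<le> k \<Longrightarrow> z \<le> l" unfolding l_def using Zfin by auto
  have rmin: "\<And>z. z \<in> Z \<Longrightarrow> k \<le> z \<Longrightarrow> r \<le> z" unfolding r_def using Zfin by auto
  have rn: "r \<le> n" using rmin[of n] kn by (auto simp: Z_def)
  have between: "1 \<le> p \<and> p < n \<and> p \<notin> CL" if "l < p" "p < r" for p
  proof -
    have "p \<notin> Z"
    proof
      assume pZ: "p \<in> Z"
      show False
      proof (cases "p \<le> k")
        case True then show False using lmax[OF pZ] that by simp
      next
        case False then show False using rmin[OF pZ] that by simp
      qed
    qed
    then show ?thesis using that rn unfolding Z_def by simp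
  qed
  have iu': "\<forall>p. 1 \<le> p \<and> p < n \<and> p \<notin> CL \<longrightarrow> u p < u (Suc p)"
    using iu unfolding incr_off_def CL_def[symmetric] .
  have incu: "\<forall>p. l < p \<and> p < r \<longrightarrow> u p < u (Suc p)"
    using iu' between by blast
  have iw': "\<forall>p. 1 \<le> p \<and> p < n \<and> p \<notin> CL \<longrightarrow> w p < w (Suc p)"
    using iw unfolding incr_off_def CL_def[symmetric] .
  have incw: "\<forall>p. l < p \<and> p < r \<longrightarrow> w p < w (Suc p)"
    using iw' between by blast
  have lk: "l \<le> k" "l \<in> Z" using lZ by auto
  have kr: "k \<le> r" "r \<in> Z" using rZ by auto
  show "N w k x \<le> N u k x"
    using N_block_dom[OF incu incw lk(1) kr(1) Zdom[OF lk(2)] Zdom[OF kr(2)]] .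
qed


lemma down_closed_interval:
  assumes "S \<subseteq> {1..n}" "\<And>i i'. i \<in> S \<Longrightarrow> 1 \<le> i' \<Longrightarrow> i' \<le> i \<Longrightarrow> i' \<in> S"
  shows "S = {1..card S}"
proof (cases "S = {}")
  case True then show ?thesis by simp
next
  case False
  have fin: "finite S" using assms(1) finite_subset by blast
  define m where "m = Max S"
  have mS: "m \<in> S" unfolding m_def using fin False by simp
  have "S = {1..m}"
  proof
    show "S \<subseteq> {1..m}" using assms(1) fin unfolding m_def by auto
    show "{1..m} \<subseteq> S" using assms(2) mS by auto
  qed
  then show ?thesis by simp
qed

context
  fixes n :: nat and lam :: "nat \<Rightarrow> nat"
  assumes part: "is_partition n lam"
begin

lemma lam_mono: "1 \<le> i \<Longrightarrow> i \<le> i' \<Longrightarrow> i' \<le> n \<Longrightarrow> lam i' \<le> lam i"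
  using part unfolding is_partition_def by blast

lemma lam_n: "lam n = 0"
  using part unfolding is_partition_def by blast

lemma n_pos: "1 \<le> n"
  using part unfolding is_partition_def by auto

lemma colset: "{i. 1 \<le> i \<and> i \<le> n \<and> j \<le> lam i} = {1..col_len n lam j}"
proof -
  have "{i. 1 \<le> i \<and> i \<le> n \<and> j \<le> lam i} = {1..card {i. 1 \<le> i \<and> i \<le> n \<and> j \<le> lam i}}"
  proof (rule down_closed_interval[where n = n])
    fix i i' assume "i \<in> {i. 1 \<le> i \<and> i \<le> n \<and> j \<le> lam i}" "1 \<le> i'" "i' \<le> i"
    then show "i' \<in> {i. 1 \<le> i \<and> i \<le> n \<and> j \<le> lam i}" using lam_mono[of i' i] by auto
  qed auto
  then show ?thesis unfolding col_len_def by simp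
qed

lemma le_lam_iff: "1 \<le> i \<Longrightarrow> i \<le> n \<Longrightarrow> j \<le> lam i \<longleftrightarrow> i \<le> col_len n lam j"
  using colset[of j] by (auto simp: set_eq_iff)

lemma col_len_lt: "1 \<le> j \<Longrightarrow> col_len n lam j < n"
proof -
  assume j: "1 \<le> j"
  have "col_len n lam j \<le> n" by (rule col_len_le)
  moreover have "col_len n lam j \<noteq> n"
  proof
    assume "col_len n lam j = n"
    then have "j \<le> lam n" using le_lam_iff[of n j] n_pos by simp
    then show False using lam_n j by simp
  qed
  ultimately show ?thesis by simp
qed

lemma col_len_mono: "j \<le> j' \<Longrightarrow> col_len n lam j' \<le> col_len n lam j"
  unfolding col_len_def by (intro card_mono) auto

lemma col_len_pos: "1 \<le> j \<Longrightarrow> j \<le> lam 1 \<Longrightarrow> 1 \<le> col_len n lam j"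
  using le_lam_iff[of 1 j] n_pos by simp

lemma col_len_zero: "lam 1 < j \<Longrightarrow> col_len n lam j = 0"
proof -
  assume "lam 1 < j"
  then have "{i. 1 \<le> i \<and> i \<le> n \<and> j \<le> lam i} = {}" using lam_mono[of 1] by fastforce
  then show ?thesis unfolding col_len_def by simp
qed

lemma in_shape_iff: "in_shape n lam j i \<longleftrightarrow> 1 \<le> j \<and> 1 \<le> i \<and> i \<le> col_len n lam j"
proof
  assume "in_shape n lam j i"
  then show "1 \<le> j \<and> 1 \<le> i \<and> i \<le> col_len n lam j" unfolding in_shape_def using le_lam_iff by auto
next
  assume a: "1 \<le> j \<and> 1 \<le> i \<and> i \<le> col_len n lam j"
  then have "i \<le> n" using col_len_le[of n lam j] by simp
  then show "in_shape n lam j i" unfolding in_shape_def using a le_lam_iff by auto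
qed

end

definition phi :: "nat \<Rightarrow> nat set \<Rightarrow> nat set" where
  "phi t P = (if t \<in> P then P else insert t (P - {Max {y \<in> P. y \<le> t}}))"

fun PhiM :: "(nat \<Rightarrow> nat) \<Rightarrow> nat set \<Rightarrow> nat \<Rightarrow> nat set" where
  "PhiM t Q 0 = Q"
| "PhiM t Q (Suc m) = PhiM t (phi (t (Suc m)) Q) m"

definition condA :: "(nat \<Rightarrow> nat) \<Rightarrow> (nat \<Rightarrow> nat) \<Rightarrow> nat set \<Rightarrow> nat \<Rightarrow> bool" where
  "condA a t Q m \<longleftrightarrow> (\<forall>i\<in>{1..m}. a i \<in> Q \<and> a i \<le> t i)"

definition incr_upto :: "(nat \<Rightarrow> nat) \<Rightarrow> nat \<Rightarrow> bool" where
  "incr_upto a m \<longleftrightarrow> (\<forall>i i'. 1 \<le> i \<and> i < i' \<and> i' \<le> m \<longrightarrow> a i < a i')"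

lemma incr_upto_lt: "incr_upto a m \<Longrightarrow> 1 \<le> i \<Longrightarrow> i < i' \<Longrightarrow> i' \<le> m \<Longrightarrow> a i < a i'"
  unfolding incr_upto_def by blast

lemma incr_upto_le: "incr_upto a m \<Longrightarrow> 1 \<le> i \<Longrightarrow> i \<le> i' \<Longrightarrow> i' \<le> m \<Longrightarrow> a i \<le> a i'"
  using incr_upto_lt[of a m i i'] by (cases "i = i'") auto

lemma phi_ins:
  assumes fin: "finite Q" and eQ: "e \<notin> Q" and te: "t < e" and yQ: "y \<in> Q" and yt: "y \<le> t"
  shows "phi t (insert e Q) = insert e (phi t Q)"
proof (cases "t \<in> Q")
  case True then show ?thesis unfolding phi_def by auto
next
  case False
  have tne: "t \<notin> insert e Q" using False te by simp
  have eq: "{y \<in> insert e Q. y \<le> t} = {y \<in> Q. y \<le> t}" using te by auto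
  have ne: "{y \<in> Q. y \<le> t} \<noteq> {}" using yQ yt by blast
  have fn: "finite {y \<in> Q. y \<le> t}" using fin by simp
  have "Max {y \<in> Q. y \<le> t} \<in> {y \<in> Q. y \<le> t}" using Max_in[OF fn ne] .
  then have "Max {y \<in> Q. y \<le> t} \<le> t" by simp
  then have mne: "Max {y \<in> Q. y \<le> t} \<noteq> e" using te by simp
  have "phi t (insert e Q) = insert t (insert e Q - {Max {y \<in> Q. y \<le> t}})"
    unfolding phi_def using tne eq by simp
  also have "\<dots> = insert e (insert t (Q - {Max {y \<in> Q. y \<le> t}}))" using mne by blast
  also have "\<dots> = insert e (phi t Q)" unfolding phi_def using False by simp
  finally show ?thesis .
qed

lemma phi_max_ge:
  assumes fin: "finite Q" and "y \<in> Q" "y \<le> t"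
  shows "y \<le> Max {y \<in> Q. y \<le> t}"
  using assms by (intro Max_ge) auto

lemma phi_keeps:
  assumes fin: "finite Q" and "a0 \<in> Q" "a0 \<le> t" "x \<in> Q" "x < a0"
  shows "x \<in> phi t Q"
proof -
  have "a0 \<le> Max {y \<in> Q. y \<le> t}" using phi_max_ge[OF fin assms(2,3)] .
  then show ?thesis unfolding phi_def using assms(4,5) by auto
qed

lemma phi_finite: "finite Q \<Longrightarrow> finite (phi t Q)"
  unfolding phi_def by auto

lemma condA_step:
  assumes fin: "finite Q" and inc: "incr_upto a (Suc m)" and c: "condA a t Q (Suc m)"
  shows "condA a t (phi (t (Suc m)) Q) m"
  unfolding condA_def
proof
  fix i assume i: "i \<in> {1..m}"
  have am: "a (Suc m) \<in> Q" "a (Suc m) \<le> t (Suc m)" using c unfolding condA_def by auto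
  have "a i < a (Suc m)" using incr_upto_lt[OF inc, of i "Suc m"] i by auto
  moreover have "a i \<in> Q" "a i \<le> t i" using c i unfolding condA_def by auto
  ultimately show "a i \<in> phi (t (Suc m)) Q \<and> a i \<le> t i"
    using phi_keeps[OF fin am] by auto
qed

lemma incr_upto_less: "incr_upto a (Suc m) \<Longrightarrow> incr_upto a m"
  unfolding incr_upto_def by (meson le_SucI)

lemma incr_upto_pred: "incr_upto a m \<Longrightarrow> incr_upto a (m - 1)"
  unfolding incr_upto_def by (meson diff_le_self le_trans)


lemma PhiM_finite: "finite Q \<Longrightarrow> finite (PhiM t Q m)"
  by (induction m arbitrary: Q) (auto simp: phi_finite)

lemma PhiM_ins:
  assumes "finite Q" "e \<notin> Q" "\<forall>i\<in>{1..m}. t i < e" "condA a t Q m" "incr_upto a m"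
  shows "PhiM t (insert e Q) m = insert e (PhiM t Q m)"
  using assms
proof (induction m arbitrary: Q)
  case 0 then show ?case by simp
next
  case (Suc m)
  have am: "a (Suc m) \<in> Q" "a (Suc m) \<le> t (Suc m)" using Suc.prems(4) unfolding condA_def by auto
  have te: "t (Suc m) < e" using Suc.prems(3) by simp
  have "phi (t (Suc m)) (insert e Q) = insert e (phi (t (Suc m)) Q)"
    using phi_ins[OF Suc.prems(1,2) te am] .
  moreover have "e \<notin> phi (t (Suc m)) Q" using Suc.prems(2) te unfolding phi_def by auto
  moreover have "condA a t (phi (t (Suc m)) Q) m" using condA_step[OF Suc.prems(1,5,4)] .
  moreover have "finite (phi (t (Suc m)) Q)" using phi_finite[OF Suc.prems(1)] .
  moreover have "\<forall>i\<in>{1..m}. t i < e" using Suc.prems(3) by simp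
  moreover have "incr_upto a m" using incr_upto_less[OF Suc.prems(5)] .
  ultimately have "PhiM t (insert e (phi (t (Suc m)) Q)) m = insert e (PhiM t (phi (t (Suc m)) Q) m)"
    using Suc.IH[of "phi (t (Suc m)) Q"] by blast
  then show ?case using \<open>phi (t (Suc m)) (insert e Q) = insert e (phi (t (Suc m)) Q)\<close> by simp
qed

fun fptr :: "(nat \<Rightarrow> nat) \<Rightarrow> nat list \<Rightarrow> nat \<Rightarrow> nat list" where
  "fptr t [] m = []"
| "fptr t (x # xs) m = (if 0 < m \<and> x \<le> t m then t m # fptr t xs (m - 1) else x # fptr t xs m)"

lemma fptr_0[simp]: fixes xs :: "nat list" shows "fptr t xs 0 = xs"
  by (induction xs) auto

lemma fptr_set: "set (fptr t xs m) \<subseteq> set xs \<union> t ` {1..m}"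
proof (induction xs arbitrary: m)
  case Nil then show ?case by simp
next
  case (Cons x xs)
  show ?case
  proof (cases "0 < m \<and> x \<le> t m")
    case True
    have "t ` {1..m - 1} \<subseteq> t ` {1..m}" by auto
    then have "set (fptr t xs (m - 1)) \<subseteq> set xs \<union> t ` {1..m}" using Cons[of "m - 1"] by blast
    then show ?thesis using True by auto
  next
    case False then show ?thesis using Cons[of m] by auto
  qed
qed

lemma fptr_sorted:
  assumes "sorted_wrt (>) xs" "incr_upto t m"
  shows "sorted_wrt (>) (fptr t xs m)"
  using assms
proof (induction xs arbitrary: m)
  case Nil then show ?case by simp
next
  case (Cons x xs)
  show ?case
  proof (cases "0 < m \<and> x \<le> t m")
    case True
    have "incr_upto t (m - 1)" using Cons.prems(2) by (rule incr_upto_pred)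
    then have s: "sorted_wrt (>) (fptr t xs (m - 1))" using Cons by simp
    have "\<forall>y\<in>set (fptr t xs (m - 1)). y < t m"
    proof
      fix y assume "y \<in> set (fptr t xs (m - 1))"
      then have "y \<in> set xs \<or> y \<in> t ` {1..m - 1}" using fptr_set by blast
      then show "y < t m"
      proof
        assume "y \<in> set xs" then show ?thesis using Cons.prems(1) True by auto
      next
        assume "y \<in> t ` {1..m - 1}"
        then obtain i where "i \<in> {1..m - 1}" "y = t i" by auto
        then show ?thesis using incr_upto_lt[OF Cons.prems(2), of i m] True by auto
      qed
    qed
    have f: "fptr t (x # xs) m = t m # fptr t xs (m - 1)" using True by simp
    show ?thesis unfolding f using s \<open>\<forall>y\<in>set (fptr t xs (m - 1)). y < t m\<close> by simp
  next
    case False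
    then have s: "sorted_wrt (>) (fptr t xs m)" using Cons by simp
    have "\<forall>y\<in>set (fptr t xs m). y < x"
    proof
      fix y assume "y \<in> set (fptr t xs m)"
      then have "y \<in> set xs \<or> y \<in> t ` {1..m}" using fptr_set by blast
      then show "y < x"
      proof
        assume "y \<in> set xs" then show ?thesis using Cons.prems(1) by auto
      next
        assume "y \<in> t ` {1..m}"
        then obtain i where i: "i \<in> {1..m}" "y = t i" by auto
        have "t i \<le> t m" using incr_upto_le[OF Cons.prems(2), of i m] i by auto
        moreover have "t m < x" using False i by auto
        ultimately show ?thesis using i by simp
      qed
    qed
    have f: "fptr t (x # xs) m = x # fptr t xs m" by (simp only: fptr.simps if_not_P[OF False])
    show ?thesis unfolding f using s \<open>\<forall>y\<in>set (fptr t xs m). y < x\<close> by simp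
  qed
qed

lemma fptr_length: "length (fptr t xs m) = length xs"
  by (induction xs arbitrary: m) auto

lemma fptr_Phi:
  assumes "sorted_wrt (>) xs" "incr_upto t m" "incr_upto a m" "condA a t (set xs) m"
  shows "set (fptr t xs m) = PhiM t (set xs) m"
  using assms
proof (induction xs arbitrary: m)
  case Nil
  then show ?case
  proof (cases m)
    case 0 then show ?thesis by simp
  next
    case (Suc m') then show ?thesis using Nil.prems(4) unfolding condA_def by auto
  qed
next
  case (Cons x xs)
  have xs_lt: "\<forall>y\<in>set xs. y < x" using Cons.prems(1) by simp
  have xnot: "x \<notin> set xs" using xs_lt by auto
  have sx: "sorted_wrt (>) xs" using Cons.prems(1) by simp
  show ?case
  proof (cases m)
    case 0 then show ?thesis by simp
  next
    case (Suc m')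
    show ?thesis
    proof (cases "x \<le> t m")
      case True
      have f: "fptr t (x # xs) m = t m # fptr t xs m'" using True Suc by simp
      have am: "a m \<in> insert x (set xs)" using Cons.prems(4) Suc unfolding condA_def by auto
      have ph: "phi (t m) (insert x (set xs)) = insert (t m) (set xs)"
      proof (cases "t m \<in> insert x (set xs)")
        case True
        then have "t m = x" using \<open>x \<le> t m\<close> xs_lt by auto
        then show ?thesis unfolding phi_def by simp
      next
        case False
        have "Max {y \<in> insert x (set xs). y \<le> t m} = x"
          using \<open>x \<le> t m\<close> xs_lt by (intro Max_eqI) auto
        then show ?thesis unfolding phi_def using False xnot by auto
      qed
      have c': "condA a t (set xs) m'"
        unfolding condA_def
      proof
        fix i assume i: "i \<in> {1..m'}"
        have "a i < a m" using incr_upto_lt[OF Cons.prems(3), of i m] i Suc by auto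
        moreover have "a m \<le> x" using am xs_lt by auto
        moreover have "a i \<in> insert x (set xs)" "a i \<le> t i" using Cons.prems(4) i Suc unfolding condA_def by auto
        ultimately show "a i \<in> set xs \<and> a i \<le> t i" by auto
      qed
      have im': "incr_upto t m'" "incr_upto a m'" using Cons.prems(2,3) Suc incr_upto_less by auto
      have tnot: "t m \<notin> set xs" using xs_lt True by auto
      have tlt: "\<forall>i\<in>{1..m'}. t i < t m" using incr_upto_lt[OF Cons.prems(2)] Suc by auto
      have "PhiM t (set (x # xs)) m = PhiM t (insert (t m) (set xs)) m'"
        using Suc ph by simp
      also have "\<dots> = insert (t m) (PhiM t (set xs) m')"
        using PhiM_ins[OF _ tnot tlt c' im'(2)] by simp
      also have "\<dots> = insert (t m) (set (fptr t xs m'))"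
        using Cons.IH[OF sx im' c'] by simp
      finally show ?thesis using f by simp
    next
      case False
      have f: "fptr t (x # xs) m = x # fptr t xs m" using False Suc by simp
      have c': "condA a t (set xs) m"
        unfolding condA_def
      proof
        fix i assume i: "i \<in> {1..m}"
        have "t i \<le> t m" using incr_upto_le[OF Cons.prems(2), of i m] i by auto
        moreover have "a i \<in> insert x (set xs)" "a i \<le> t i" using Cons.prems(4) i unfolding condA_def by auto
        ultimately show "a i \<in> set xs \<and> a i \<le> t i" using False by auto
      qed
      have tlt: "\<forall>i\<in>{1..m}. t i < x"
      proof
        fix i assume i: "i \<in> {1..m}"
        have "t i \<le> t m" using incr_upto_le[OF Cons.prems(2), of i m] i by auto
        then show "t i < x" using False by simp
      qed
      have "PhiM t (set (x # xs)) m = insert x (PhiM t (set xs) m)"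
        using PhiM_ins[OF _ xnot tlt c' Cons.prems(3)] by simp
      also have "\<dots> = insert x (set (fptr t xs m))"
        using Cons.IH[OF sx Cons.prems(2,3) c'] by simp
      finally show ?thesis using f by simp
    qed
  qed
qed


definition spath :: "nat \<Rightarrow> (nat \<Rightarrow> nat) \<Rightarrow> (nat \<Rightarrow> nat \<Rightarrow> nat) \<Rightarrow> nat \<Rightarrow> nat
    \<Rightarrow> (nat \<times> nat) set \<Rightarrow> nat \<Rightarrow> nat \<times> (nat \<times> nat) set" where
  "spath n lam T H j M i = fold (\<lambda>h st. scan_step n lam T st h) [Suc j..<Suc H] (T j i, M)"

fun erun :: "nat \<Rightarrow> (nat \<Rightarrow> nat) \<Rightarrow> (nat \<Rightarrow> nat \<Rightarrow> nat) \<Rightarrow> nat \<Rightarrow> nat \<Rightarrow> nat list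
    \<Rightarrow> (nat \<times> nat) set \<Rightarrow> nat list \<times> (nat \<times> nat) set" where
  "erun n lam T H j [] M = ([], M)"
| "erun n lam T H j (i # is) M =
     (let (v, M') = spath n lam T H j M i; (vs, M'') = erun n lam T H j is M' in (v # vs, M''))"

fun crun :: "nat \<Rightarrow> (nat \<Rightarrow> nat) \<Rightarrow> (nat \<Rightarrow> nat \<Rightarrow> nat) \<Rightarrow> nat \<Rightarrow> nat list
    \<Rightarrow> (nat \<times> nat) set \<Rightarrow> nat list \<times> (nat \<times> nat) set" where
  "crun n lam T h [] Nm = ([], Nm)"
| "crun n lam T h (x # xs) Nm =
     (let (v, Nm') = scan_step n lam T (x, Nm) h; (vs, Nm'') = crun n lam T h xs Nm' in (v # vs, Nm''))"

definition sends :: "nat \<Rightarrow> (nat \<Rightarrow> nat) \<Rightarrow> (nat \<Rightarrow> nat \<Rightarrow> nat) \<Rightarrow> nat \<Rightarrow> nat \<Rightarrow> nat list" where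
  "sends n lam T H j = rev (fst (erun n lam T H j (rev [1..<Suc (col_len n lam j)]) {}))"

lemma fold_erun:
  "fold (\<lambda>i (es, M). let (v, M') = spath n lam T H j M i in (v # es, M')) is (es0, M)
   = (rev (fst (erun n lam T H j is M)) @ es0, snd (erun n lam T H j is M))"
proof (induction "is" arbitrary: es0 M)
  case Nil then show ?case by simp
next
  case (Cons i "is")
  obtain v M' where vM: "spath n lam T H j M i = (v, M')" by fastforce
  show ?case using Cons[of "v # es0" M'] vM by (simp split: prod.splits)
qed

lemma scan_ends_sends: "scan_ends n lam T j = sends n lam T (lam 1) j"
proof -
  have "scan_path n lam T j = spath n lam T (lam 1) j"
    unfolding scan_path_def spath_def by (intro ext) simp
  then show ?thesis unfolding scan_ends_def sends_def using fold_erun by simp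
qed

lemma step_loc1:
  assumes "\<forall>r. (h, r) \<notin> Nm"
  shows "scan_step n lam T (c, M \<union> Nm) h = (fst (scan_step n lam T (c, M) h), snd (scan_step n lam T (c, M) h) \<union> Nm)"
proof -
  have eq: "{r. 1 \<le> r \<and> r \<le> col_len n lam h \<and> (h, r) \<notin> M \<union> Nm \<and> c \<le> T h r}
      = {r. 1 \<le> r \<and> r \<le> col_len n lam h \<and> (h, r) \<notin> M \<and> c \<le> T h r}" using assms by auto
  show ?thesis unfolding scan_step_def Let_def fst_conv snd_conv eq by auto
qed

lemma step_loc2:
  assumes "\<forall>r. (h, r) \<notin> M"
  shows "scan_step n lam T (c, M \<union> Nm) h = (fst (scan_step n lam T (c, Nm) h), M \<union> snd (scan_step n lam T (c, Nm) h))"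
proof -
  have eq: "{r. 1 \<le> r \<and> r \<le> col_len n lam h \<and> (h, r) \<notin> M \<union> Nm \<and> c \<le> T h r}
      = {r. 1 \<le> r \<and> r \<le> col_len n lam h \<and> (h, r) \<notin> Nm \<and> c \<le> T h r}" using assms by auto
  show ?thesis unfolding scan_step_def Let_def fst_conv snd_conv eq by auto
qed

lemma step_marks: "snd (scan_step n lam T (c, M) h) \<subseteq> M \<union> {h} \<times> UNIV"
  unfolding scan_step_def Let_def by auto

lemma fold_loc:
  assumes "\<forall>h\<in>set hs. \<forall>r. (h, r) \<notin> Nm"
  shows "fold (\<lambda>h st. scan_step n lam T st h) hs (c, M \<union> Nm)
       = (fst (fold (\<lambda>h st. scan_step n lam T st h) hs (c, M)),
          snd (fold (\<lambda>h st. scan_step n lam T st h) hs (c, M)) \<union> Nm)"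
  using assms
proof (induction hs arbitrary: c M)
  case Nil then show ?case by simp
next
  case (Cons h hs)
  have "scan_step n lam T (c, M \<union> Nm) h = (fst (scan_step n lam T (c, M) h), snd (scan_step n lam T (c, M) h) \<union> Nm)"
    using Cons.prems by (intro step_loc1) simp
  then show ?case using Cons.IH[of "fst (scan_step n lam T (c, M) h)" "snd (scan_step n lam T (c, M) h)"] Cons.prems
    by simp
qed

lemma fold_marks:
  assumes "\<forall>h\<in>set hs. h \<le> H" "\<forall>p\<in>M. fst p \<le> H"
  shows "\<forall>p\<in>snd (fold (\<lambda>h st. scan_step n lam T st h) hs (c, M)). fst p \<le> H"
  using assms
proof (induction hs arbitrary: c M)
  case Nil then show ?case by simp
next
  case (Cons h hs)
  have "\<forall>p\<in>snd (scan_step n lam T (c, M) h). fst p \<le> H"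
    using step_marks[of n lam T c M h] Cons.prems by auto
  then show ?case using Cons.IH[of "snd (scan_step n lam T (c, M) h)" "fst (scan_step n lam T (c, M) h)"] Cons.prems
    by simp
qed

lemma spath_marks:
  assumes "\<forall>p\<in>M. fst p \<le> H"
  shows "\<forall>p\<in>snd (spath n lam T H j M i). fst p \<le> H"
  unfolding spath_def by (rule fold_marks) (use assms in auto)

lemma spath_loc:
  assumes "\<forall>p\<in>Nm. H < fst p"
  shows "spath n lam T H j (M \<union> Nm) i = (fst (spath n lam T H j M i), snd (spath n lam T H j M i) \<union> Nm)"
  unfolding spath_def by (rule fold_loc) (use assms in force)

lemma spath_Suc:
  assumes "j \<le> H"
  shows "spath n lam T (Suc H) j M i = scan_step n lam T (spath n lam T H j M i) (Suc H)"
proof -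
  have "[Suc j..<Suc (Suc H)] = [Suc j..<Suc H] @ [Suc H]" using assms by simp
  then show ?thesis unfolding spath_def by simp
qed

lemma crun_marks:
  assumes "\<forall>p\<in>Nm. fst p = h"
  shows "\<forall>p\<in>snd (crun n lam T h xs Nm). fst p = h"
  using assms
proof (induction xs arbitrary: Nm)
  case Nil then show ?case by simp
next
  case (Cons x xs)
  obtain v Nm' where vN: "scan_step n lam T (x, Nm) h = (v, Nm')" by fastforce
  have "\<forall>p\<in>Nm'. fst p = h" using step_marks[of n lam T x Nm h] vN Cons.prems by auto
  then show ?case using Cons.IH[of Nm'] vN by (simp split: prod.splits)
qed

lemma erun_step:
  assumes jH: "j \<le> H" and M: "\<forall>p\<in>M. fst p \<le> H" and Nm: "\<forall>p\<in>Nm. fst p = Suc H"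
  shows "erun n lam T (Suc H) j is (M \<union> Nm)
       = (fst (crun n lam T (Suc H) (fst (erun n lam T H j is M)) Nm),
          snd (erun n lam T H j is M) \<union> snd (crun n lam T (Suc H) (fst (erun n lam T H j is M)) Nm))"
  using M Nm
proof (induction "is" arbitrary: M Nm)
  case Nil then show ?case by simp
next
  case (Cons i "is")
  obtain v M' where vM: "spath n lam T H j M i = (v, M')" by fastforce
  obtain v2 Nm' where vN: "scan_step n lam T (v, Nm) (Suc H) = (v2, Nm')" by fastforce
  have M': "\<forall>p\<in>M'. fst p \<le> H" using spath_marks[OF Cons.prems(1), of n lam T j i] vM by simp
  have Nm': "\<forall>p\<in>Nm'. fst p = Suc H" using step_marks[of n lam T v Nm "Suc H"] vN Cons.prems(2) by auto
  have "spath n lam T H j (M \<union> Nm) i = (v, M' \<union> Nm)"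
    using spath_loc[of Nm H n lam T j M i] Cons.prems(2) vM by simp
  then have "spath n lam T (Suc H) j (M \<union> Nm) i = scan_step n lam T (v, M' \<union> Nm) (Suc H)"
    using spath_Suc[OF jH] by simp
  also have "\<dots> = (v2, M' \<union> Nm')"
  proof -
    have "\<forall>r. (Suc H, r) \<notin> M'" using M' by force
    then show ?thesis using step_loc2[of "Suc H" M' n lam T v Nm] vN by simp
  qed
  finally have sp: "spath n lam T (Suc H) j (M \<union> Nm) i = (v2, M' \<union> Nm')" .
  show ?case using Cons.IH[OF M' Nm'] sp vM vN by (simp split: prod.splits)
qed

lemma crun_fptr:
  assumes inc: "incr_upto (T h) (col_len n lam h)"
  shows "m \<le> col_len n lam h \<Longrightarrow> fst (crun n lam T h xs {(h, r) | r. m < r \<and> r \<le> col_len n lam h}) = fptr (T h) xs m"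
proof (induction xs arbitrary: m)
  case Nil then show ?case by simp
next
  case (Cons x xs)
  let ?c = "col_len n lam h"
  let ?NN = "\<lambda>m. {(h, r) | r. m < r \<and> r \<le> ?c}"
  have Rs: "{r. 1 \<le> r \<and> r \<le> ?c \<and> (h, r) \<notin> ?NN m \<and> x \<le> T h r} = {r. 1 \<le> r \<and> r \<le> m \<and> x \<le> T h r}"
    using Cons.prems by auto
  define R0 where "R0 = {r. 1 \<le> r \<and> r \<le> m \<and> x \<le> T h r}"
  have Rs': "{r. 1 \<le> r \<and> r \<le> ?c \<and> (h, r) \<notin> ?NN m \<and> x \<le> T h r} = R0" using Rs unfolding R0_def .
  have st0: "scan_step n lam T (x, ?NN m) h = (if R0 = {} then (x, ?NN m) else (T h (Max R0), insert (h, Max R0) (?NN m)))"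
    unfolding scan_step_def Let_def fst_conv snd_conv Rs' by simp
  show ?case
  proof (cases "0 < m \<and> x \<le> T h m")
    case True
    have "R0 \<noteq> {}" using True unfolding R0_def by auto
    moreover have "Max R0 = m"
      using True unfolding R0_def by (intro Max_eqI) auto
    moreover have "insert (h, m) (?NN m) = ?NN (m - 1)" using True Cons.prems by auto
    ultimately have st: "scan_step n lam T (x, ?NN m) h = (T h m, ?NN (m - 1))"
      using st0 by simp
    have "fst (crun n lam T h xs (?NN (m - 1))) = fptr (T h) xs (m - 1)" using Cons.IH[of "m - 1"] Cons.prems by simp
    then show ?thesis using st True by (cases "crun n lam T h xs (?NN (m - 1))") simp
  next
    case False
    have "R0 = {}"
    proof (rule ccontr)
      assume "R0 \<noteq> {}"
      then obtain r where r: "1 \<le> r" "r \<le> m" "x \<le> T h r" unfolding R0_def by auto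
      have "T h r \<le> T h m" using incr_upto_le[OF inc r(1) r(2)] Cons.prems by simp
      then show False using False r by auto
    qed
    then have st: "scan_step n lam T (x, ?NN m) h = (x, ?NN m)"
      using st0 by simp
    have f: "fptr (T h) (x # xs) m = x # fptr (T h) xs m" by (simp only: fptr.simps if_not_P[OF False])
    show ?thesis using st Cons.IH[OF Cons.prems] f by (cases "crun n lam T h xs (?NN m)") simp
  qed
qed

lemma erun_base: "erun n lam T j j is M = (map (T j) is, M)"
  by (induction "is") (auto simp: spath_def)

lemma sends_base: "sends n lam T j j = map (T j) [1..<Suc (col_len n lam j)]"
  unfolding sends_def erun_base by (simp add: rev_map)

lemma sends_step:
  assumes jH: "j \<le> H" and inc: "incr_upto (T (Suc H)) (col_len n lam (Suc H))"
  shows "sends n lam T (Suc H) j = rev (fptr (T (Suc H)) (rev (sends n lam T H j)) (col_len n lam (Suc H)))"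
proof -
  let ?is = "rev [1..<Suc (col_len n lam j)]"
  have e: "erun n lam T (Suc H) j ?is ({} \<union> {}) =
     (fst (crun n lam T (Suc H) (fst (erun n lam T H j ?is {})) {}),
      snd (erun n lam T H j ?is {}) \<union> snd (crun n lam T (Suc H) (fst (erun n lam T H j ?is {})) {}))"
    by (rule erun_step[OF jH]) auto
  have emp: "{(Suc H, r) | r. col_len n lam (Suc H) < r \<and> r \<le> col_len n lam (Suc H)} = {}" by auto
  have "fst (crun n lam T (Suc H) (fst (erun n lam T H j ?is {})) {}) = fptr (T (Suc H)) (fst (erun n lam T H j ?is {})) (col_len n lam (Suc H))"
    using crun_fptr[where T=T and h="Suc H" and n=n and lam=lam, OF inc order_refl, of "fst (erun n lam T H j ?is {})"] unfolding emp .
  then show ?thesis unfolding sends_def using e by simp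
qed


lemma fold_upd_comm:
  "h \<notin> set (map snd ps) \<Longrightarrow>
   fold (\<lambda>(a, b) f. f(b := s a)) ps (g(h := v)) = (fold (\<lambda>(a, b) f. f(b := s a)) ps g)(h := v)"
proof (induction ps arbitrary: g)
  case Nil then show ?case by simp
next
  case (Cons p ps)
  obtain a b where p: "p = (a, b)" by fastforce
  have hb: "h \<noteq> b" using Cons.prems p by auto
  have tw: "g(h := v, b := s a) = (g(b := s a))(h := v)" using hb by (simp add: fun_upd_twist)
  have "fold (\<lambda>(a, b) f. f(b := s a)) (p # ps) (g(h := v)) = fold (\<lambda>(a, b) f. f(b := s a)) ps (g(h := v, b := s a))"
    using p by simp
  also have "\<dots> = fold (\<lambda>(a, b) f. f(b := s a)) ps ((g(b := s a))(h := v))" using tw by simp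
  also have "\<dots> = (fold (\<lambda>(a, b) f. f(b := s a)) ps (g(b := s a)))(h := v)"
  proof -
    have "h \<notin> set (map snd ps)" using Cons.prems by simp
    then show ?thesis by (rule Cons.IH)
  qed
  also have "\<dots> = (fold (\<lambda>(a, b) f. f(b := s a)) (p # ps) g)(h := v)" using p by simp
  finally show ?case .
qed

lemma fold_upd_out:
  "q \<notin> set (map snd ps) \<Longrightarrow> fold (\<lambda>(a, b) f. f(b := s a)) ps g q = g q"
proof (induction ps arbitrary: g)
  case Nil then show ?case by simp
next
  case (Cons p ps)
  obtain a b where p: "p = (a, b)" by fastforce
  then show ?case using Cons.IH[of "g(b := s a)"] Cons.prems by auto
qed

lemma map_snd_zip_tl: "map snd (zip xs (tl xs)) = tl xs"
  by (cases xs) (simp_all add: map_snd_zip_take)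

lemma cyc_single: "cyc_update s [y] = s"
  unfolding cyc_update_def by simp

lemma cyc_cons:
  assumes "ks \<noteq> []" "y \<notin> set ks" "hd ks \<notin> set (tl ks)"
  shows "cyc_update s (y # ks) = cyc_update s ks \<circ> transpose y (hd ks)"
proof -
  obtain h ks' where ks: "ks = h # ks'" using assms(1) by (cases ks) auto
  let ?upd = "\<lambda>(a, b) f. f(b := s a)"
  let ?rest = "zip (h # ks') ks'"
  have ms: "map snd ?rest = ks'" using map_snd_zip_tl[of "h # ks'"] by simp
  have hnot: "h \<notin> set (map snd ?rest)" using assms(3) ks ms by simp
  have ynot: "y \<notin> set (map snd ?rest)" using assms(2) ks ms by simp
  have yh: "y \<noteq> h" using assms(2) ks by simp
  define U where "U = fold ?upd ?rest s"
  have Uy: "U y = s y" unfolding U_def using fold_upd_out[OF ynot, of s s] .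
  have L: "cyc_update s (y # ks) = (U(h := s y))(y := s (last ks))"
    unfolding cyc_update_def U_def using ks fold_upd_comm[OF hnot, of s s "s y"] by simp
  have R: "cyc_update s ks = U(h := s (last ks))"
    unfolding cyc_update_def U_def using ks by simp
  show ?thesis
  proof
    fix q
    show "cyc_update s (y # ks) q = (cyc_update s ks \<circ> transpose y (hd ks)) q"
      unfolding L R using yh ks Uy by (auto simp: transpose_def)
  qed
qed

lemma Max_shift:
  fixes P :: "nat set"
  assumes "finite P" "b \<in> P" "a \<le> b" "b \<le> t"
  shows "Max {z \<in> P. a \<le> z \<and> z \<le> t} = Max {z \<in> P. b \<le> z \<and> z \<le> t}"
proof -
  let ?A = "{z \<in> P. a \<le> z \<and> z \<le> t}" and ?B = "{z \<in> P. b \<le> z \<and> z \<le> t}"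
  have fA: "finite ?A" "finite ?B" using assms(1) by simp_all
  have bB: "b \<in> ?B" "b \<in> ?A" using assms by auto
  have mA: "Max ?A \<in> ?A" using fA bB by (intro Max_in) auto
  have "b \<le> Max ?A" using fA bB by simp
  then have "Max ?A \<in> ?B" using mA by simp
  then have "Max ?A \<le> Max ?B" using fA by simp
  moreover have "Max ?B \<le> Max ?A"
  proof -
    have "Max ?B \<in> ?B" using fA bB by (intro Max_in) auto
    then have "Max ?B \<in> ?A" using assms(3) by auto
    then show ?thesis using fA by simp
  qed
  ultimately show ?thesis by simp
qed


definition chain_props :: "nat \<Rightarrow> (nat \<Rightarrow> nat) \<Rightarrow> nat \<Rightarrow> nat \<Rightarrow> nat \<Rightarrow> nat list \<Rightarrow> bool" where
  "chain_props n s c t y ks \<longleftrightarrow>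
    ks \<noteq> [] \<and> hd ks = y \<and> set (tl ks) \<subseteq> {q. y < q \<and> c < q \<and> q \<le> n} \<and>
    (\<forall>q. q \<notin> set ks \<longrightarrow> cyc_update s ks q = s q) \<and> cyc_update s ks y = t \<and>
    (\<forall>q\<in>set ks. s y \<le> cyc_update s ks q) \<and> cyc_update s ks permutes {1..n} \<and>
    (\<forall>K. c \<le> K \<and> y \<le> K \<longrightarrow> cyc_update s ks ` {1..K} =
        (if t \<in> s ` {1..K} then s ` {1..K}
         else insert t (s ` {1..K} - {Max {z \<in> s ` {1..K}. s y \<le> z \<and> z \<le> t}}))) \<and>
    (\<forall>p. c < p \<and> Suc p \<le> n \<and> p \<noteq> y \<and> s p < s (Suc p) \<longrightarrow> cyc_update s ks p < cyc_update s ks (Suc p))"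

lemma greedy_chain_stop: "s y = t \<Longrightarrow> greedy_chain n s c t y f = [y]"
  by (cases f) auto

lemma chain_stop:
  assumes perm: "s permutes {1..n}" and sy: "s y = t" and y: "1 \<le> y" "y \<le> n"
  shows "chain_props n s c t y (greedy_chain n s c t y f)"
proof -
  have g: "greedy_chain n s c t y f = [y]" using greedy_chain_stop[where s=s and y=y and t=t, OF sy] .
  have K: "\<And>K. y \<le> K \<Longrightarrow> t \<in> s ` {1..K}" using sy y by auto
  show ?thesis unfolding chain_props_def g cyc_single using perm sy K by auto
qed

lemma chain_main:
  fixes s :: "nat \<Rightarrow> nat"
  assumes perm: "s permutes {1..n}" and qt: "c < qt" "qt \<le> n" "s qt = t"
  shows "1 \<le> y \<Longrightarrow> y \<le> n \<Longrightarrow> s y \<le> t \<Longrightarrow> (c < y \<Longrightarrow> y \<le> qt)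
    \<Longrightarrow> (\<forall>q. c < q \<and> q < y \<longrightarrow> \<not> (s y < s q \<and> s q \<le> t))
    \<Longrightarrow> (\<forall>q. 1 \<le> q \<and> q \<le> c \<and> q \<noteq> y \<longrightarrow> s q < s y \<or> t < s q)
    \<Longrightarrow> card {q. c < q \<and> q \<le> n \<and> s y < s q \<and> s q \<le> t} \<le> f
    \<Longrightarrow> chain_props n s c t y (greedy_chain n s c t y f)"
proof (induction f arbitrary: y)
  case 0
  show ?case
  proof (cases "s y = t")
    case True then show ?thesis using chain_stop[OF perm True 0(1) 0(2)] by blast
  next
    case False
    then have "qt \<in> {q. c < q \<and> q \<le> n \<and> s y < s q \<and> s q \<le> t}" using qt 0 by auto
    moreover have "finite {q. c < q \<and> q \<le> n \<and> s y < s q \<and> s q \<le> t}" by simp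
    ultimately have "card {q. c < q \<and> q \<le> n \<and> s y < s q \<and> s q \<le> t} > 0"
      by (metis card_gt_0_iff empty_iff)
    then show ?thesis using 0 by simp
  qed
next
  case (Suc f)
  note y1 = Suc.prems(1) and yn = Suc.prems(2) and syt = Suc.prems(3) and yqt = Suc.prems(4)
    and Hy = Suc.prems(5) and Out = Suc.prems(6) and fuel = Suc.prems(7)
  show ?case
  proof (cases "s y = t")
    case True then show ?thesis using chain_stop[OF perm True y1 yn] by blast
  next
    case False
    then have syt': "s y < t" using syt by simp
    define Cand where "Cand = (\<lambda>l. c < l \<and> l \<le> n \<and> s y < s l \<and> s l \<le> t)"
    define l where "l = (LEAST l. c < l \<and> l \<le> n \<and> s y < s l \<and> s l \<le> t)"
    have Cqt: "Cand qt" unfolding Cand_def using qt syt' by auto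
    have Cl: "c < l" "l \<le> n" "s y < s l" "s l \<le> t"
      using LeastI[of Cand qt] Cqt unfolding l_def Cand_def by auto
    have lqt: "l \<le> qt" using Least_le[of Cand qt] Cqt unfolding l_def Cand_def by auto
    have notc: "\<And>q. q < l \<Longrightarrow> \<not> (c < q \<and> q \<le> n \<and> s y < s q \<and> s q \<le> t)"
      using not_less_Least[of _ Cand] unfolding l_def Cand_def by blast
    have yl: "y < l"
    proof (cases "y \<le> c")
      case True then show ?thesis using Cl by simp
    next
      case False
      have "l \<noteq> y" using Cl by auto
      moreover have "\<not> l < y" using Hy Cl by auto
      ultimately show ?thesis by simp
    qed
    have gc: "greedy_chain n s c t y (Suc f) = y # greedy_chain n s c t l f"
      using False unfolding l_def by simp
    let ?ksl = "greedy_chain n s c t l f"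
    let ?Dl = "cyc_update s ?ksl"
    have candsub: "{q. c < q \<and> q \<le> n \<and> s l < s q \<and> s q \<le> t} \<subseteq> {q. c < q \<and> q \<le> n \<and> s y < s q \<and> s q \<le> t} - {l}"
      using Cl by auto
    have "card {q. c < q \<and> q \<le> n \<and> s l < s q \<and> s q \<le> t} < card {q. c < q \<and> q \<le> n \<and> s y < s q \<and> s q \<le> t}"
    proof (rule psubset_card_mono)
      show "finite {q. c < q \<and> q \<le> n \<and> s y < s q \<and> s q \<le> t}" by simp
      show "{q. c < q \<and> q \<le> n \<and> s l < s q \<and> s q \<le> t} \<subset> {q. c < q \<and> q \<le> n \<and> s y < s q \<and> s q \<le> t}"
        using candsub Cl by auto
    qed
    then have fuel_l: "card {q. c < q \<and> q \<le> n \<and> s l < s q \<and> s q \<le> t} \<le> f" using fuel by simp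
    have Hl: "\<forall>q. c < q \<and> q < l \<longrightarrow> \<not> (s l < s q \<and> s q \<le> t)"
    proof (intro allI impI)
      fix q assume q: "c < q \<and> q < l"
      then have "\<not> (s y < s q \<and> s q \<le> t)" using notc[of q] Cl by auto
      then show "\<not> (s l < s q \<and> s q \<le> t)" using Cl by auto
    qed
    have Outl: "\<forall>q. 1 \<le> q \<and> q \<le> c \<and> q \<noteq> l \<longrightarrow> s q < s l \<or> t < s q"
    proof (intro allI impI)
      fix q assume q: "1 \<le> q \<and> q \<le> c \<and> q \<noteq> l"
      show "s q < s l \<or> t < s q"
      proof (cases "q = y")
        case True then show ?thesis using Cl by simp
      next
        case False then show ?thesis using Out q Cl by force
      qed
    qed
    have Pl: "chain_props n s c t l ?ksl"
      using Suc.IH[of l] Cl lqt Hl Outl fuel_l by simp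
    have ksl: "?ksl \<noteq> []" "hd ?ksl = l" "set (tl ?ksl) \<subseteq> {q. l < q \<and> c < q \<and> q \<le> n}"
      "\<forall>q. q \<notin> set ?ksl \<longrightarrow> ?Dl q = s q" "?Dl l = t" "\<forall>q\<in>set ?ksl. s l \<le> ?Dl q"
      "?Dl permutes {1..n}"
      "\<forall>K. c \<le> K \<and> l \<le> K \<longrightarrow> ?Dl ` {1..K} =
        (if t \<in> s ` {1..K} then s ` {1..K}
         else insert t (s ` {1..K} - {Max {z \<in> s ` {1..K}. s l \<le> z \<and> z \<le> t}}))"
      "\<forall>p. c < p \<and> Suc p \<le> n \<and> p \<noteq> l \<and> s p < s (Suc p) \<longrightarrow> ?Dl p < ?Dl (Suc p)"
      using Pl unfolding chain_props_def by blast+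
    have set_ksl: "\<And>q. q \<in> set ?ksl \<Longrightarrow> q = l \<or> l < q"
    proof -
      fix q assume "q \<in> set ?ksl"
      then have "q = hd ?ksl \<or> q \<in> set (tl ?ksl)" using ksl(1) by (cases ?ksl) auto
      then show "q = l \<or> l < q" using ksl(2,3) by auto
    qed
    have ynot: "y \<notin> set ?ksl" using set_ksl yl by force
    have lnot: "hd ?ksl \<notin> set (tl ?ksl)" using ksl(2,3) by auto
    have D: "cyc_update s (y # ?ksl) = ?Dl \<circ> transpose y l"
      using cyc_cons[OF ksl(1) ynot lnot] ksl(2) by simp
    have Dy: "?Dl y = s y" using ksl(4) ynot by simp
    have below_l: "\<And>q. q < l \<Longrightarrow> ?Dl q = s q" using ksl(4) set_ksl by force
    let ?D = "cyc_update s (y # ?ksl)"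
    have Dapp: "\<And>q. ?D q = ?Dl (transpose y l q)" using D by simp
    have c1: "set (tl (y # ?ksl)) \<subseteq> {q. y < q \<and> c < q \<and> q \<le> n}"
    proof
      fix q assume "q \<in> set (tl (y # ?ksl))"
      then have "q \<in> set ?ksl" by simp
      then have "q = l \<or> q \<in> set (tl ?ksl)" using ksl(1,2) by (cases ?ksl) auto
      then show "q \<in> {q. y < q \<and> c < q \<and> q \<le> n}" using ksl(3) Cl yl by auto
    qed
    have c2: "\<forall>q. q \<notin> set (y # ?ksl) \<longrightarrow> ?D q = s q"
    proof (intro allI impI)
      fix q assume q: "q \<notin> set (y # ?ksl)"
      have "l \<in> set ?ksl" using ksl(1,2) by (cases ?ksl) auto
      then have "q \<noteq> l" "q \<noteq> y" using q by auto
      then show "?D q = s q" using Dapp[of q] ksl(4) q by (simp add: transpose_def)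
    qed
    have c3: "?D y = t" using Dapp[of y] ksl(5) by simp
    have c4: "\<forall>q\<in>set (y # ?ksl). s y \<le> ?D q"
    proof
      fix q assume q: "q \<in> set (y # ?ksl)"
      show "s y \<le> ?D q"
      proof (cases "q = y")
        case True then show ?thesis using c3 syt by simp
      next
        case False
        then have qk: "q \<in> set ?ksl" using q by simp
        show ?thesis
        proof (cases "q = l")
          case True then show ?thesis using Dapp[of q] Dy by simp
        next
          case False2: False
          have "?D q = ?Dl q" using Dapp[of q] False False2 by (simp add: transpose_def)
          then show ?thesis using ksl(6) qk Cl by force
        qed
      qed
    qed
    have tperm: "transpose y l permutes {1..n}" using y1 yn Cl yl by (intro permutes_swap_id) auto
    have c5: "?D permutes {1..n}" unfolding D using permutes_compose[OF tperm ksl(7)] .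
    have c6: "\<forall>K. c \<le> K \<and> y \<le> K \<longrightarrow> ?D ` {1..K} =
        (if t \<in> s ` {1..K} then s ` {1..K}
         else insert t (s ` {1..K} - {Max {z \<in> s ` {1..K}. s y \<le> z \<and> z \<le> t}}))"
    proof (intro allI impI)
      fix K assume K: "c \<le> K \<and> y \<le> K"
      have img: "?D ` {1..K} = ?Dl ` (transpose y l ` {1..K})" unfolding D by (simp add: image_comp)
      show "?D ` {1..K} = (if t \<in> s ` {1..K} then s ` {1..K}
         else insert t (s ` {1..K} - {Max {z \<in> s ` {1..K}. s y \<le> z \<and> z \<le> t}}))"
      proof (cases "l \<le> K")
        case True
        have "transpose y l permutes {1..K}" using y1 K True yl by (intro permutes_swap_id) auto
        then have "transpose y l ` {1..K} = {1..K}" by (rule permutes_image)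
        then have e1: "?D ` {1..K} = ?Dl ` {1..K}" using img by simp
        have e2: "Max {z \<in> s ` {1..K}. s y \<le> z \<and> z \<le> t} = Max {z \<in> s ` {1..K}. s l \<le> z \<and> z \<le> t}"
          using True Cl yl by (intro Max_shift) auto
        show ?thesis using e1 e2 ksl(8) K True by simp
      next
        case False
        have tr: "transpose y l ` {1..K} = insert l ({1..K} - {y})"
        proof
          show "transpose y l ` {1..K} \<subseteq> insert l ({1..K} - {y})"
            using False by (auto simp: transpose_def)
          show "insert l ({1..K} - {y}) \<subseteq> transpose y l ` {1..K}"
          proof
            fix q assume q: "q \<in> insert l ({1..K} - {y})"
            show "q \<in> transpose y l ` {1..K}"
            proof (cases "q = l")
              case True
              then have qe: "q = transpose y l y" by simp
              have "y \<in> {1..K}" using y1 K by simp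
              then show ?thesis using qe by (rule rev_image_eqI)
            next
              case False2: False
              then have "q \<in> {1..K}" "q \<noteq> y" "q \<noteq> l" using q by auto
              then have "q = transpose y l q" by (simp add: transpose_def)
              then show ?thesis using \<open>q \<in> {1..K}\<close> by blast
            qed
          qed
        qed
        have agree: "?Dl ` ({1..K} - {y}) = s ` ({1..K} - {y})"
          using below_l False by (intro image_cong) auto
        have injs: "inj s" using perm by (rule permutes_inj)
        have sdiff: "s ` ({1..K} - {y}) = s ` {1..K} - {s y}"
          using injs by (simp add: image_set_diff)
        have e1: "?D ` {1..K} = insert t (s ` {1..K} - {s y})"
          using img tr agree sdiff ksl(5) by simp
        have tnot: "t \<notin> s ` {1..K}"
        proof
          assume "t \<in> s ` {1..K}"
          then obtain q where q: "q \<in> {1..K}" "s q = t" by auto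
          then have "q = qt" using qt injs by (metis injD)
          then show False using q False lqt by simp
        qed
        have mx: "Max {z \<in> s ` {1..K}. s y \<le> z \<and> z \<le> t} = s y"
        proof (rule Max_eqI)
          show "finite {z \<in> s ` {1..K}. s y \<le> z \<and> z \<le> t}" by simp
          show "s y \<in> {z \<in> s ` {1..K}. s y \<le> z \<and> z \<le> t}" using y1 K syt by auto
          fix z assume z: "z \<in> {z \<in> s ` {1..K}. s y \<le> z \<and> z \<le> t}"
          then obtain q where q: "q \<in> {1..K}" "z = s q" "s y \<le> s q" "s q \<le> t" by auto
          show "z \<le> s y"
          proof (rule ccontr)
            assume "\<not> z \<le> s y"
            then have lt: "s y < s q" using q by simp
            then have qy: "q \<noteq> y" by auto
            show False
            proof (cases "q \<le> c")
              case True then show False using Out q qy lt by force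
            next
              case False2: False
              then have "c < q \<and> q \<le> n \<and> s y < s q \<and> s q \<le> t"
                using q lt Cl False by auto
              then show False using notc[of q] q False by simp
            qed
          qed
        qed
        show ?thesis using e1 tnot mx by simp
      qed
    qed
    have c7: "\<forall>p. c < p \<and> Suc p \<le> n \<and> p \<noteq> y \<and> s p < s (Suc p) \<longrightarrow> ?D p < ?D (Suc p)"
    proof (intro allI impI)
      fix p assume p: "c < p \<and> Suc p \<le> n \<and> p \<noteq> y \<and> s p < s (Suc p)"
      show "?D p < ?D (Suc p)"
      proof (cases "p = l")
        case True
        have a1: "?D p = s y" using Dapp[of p] True Dy by simp
        have "Suc l \<noteq> y" "Suc l \<noteq> l" using yl by auto
        then have a2: "?D (Suc p) = ?Dl (Suc l)" using Dapp[of "Suc p"] True by (simp add: transpose_def)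
        have "s y < ?Dl (Suc l)"
        proof (cases "Suc l \<in> set ?ksl")
          case True
          then show ?thesis using ksl(6) Cl by force
        next
          case False
          then have "?Dl (Suc l) = s (Suc l)" using ksl(4) by simp
          then show ?thesis using p \<open>p = l\<close> Cl by simp
        qed
        then show ?thesis using a1 a2 by simp
      next
        case pl: False
        show ?thesis
        proof (cases "Suc p = l")
          case True
          have a1: "?D p = s p" using Dapp[of p] pl p below_l[of p] True by (simp add: transpose_def)
          have a2: "?D (Suc p) = s y" using Dapp[of "Suc p"] True Dy by simp
          have "p < l" using True by simp
          then have "\<not> (s y < s p \<and> s p \<le> t)" using notc[of p] p Cl by auto
          moreover have "s p \<le> t" using p True Cl by simp
          ultimately have "s p \<le> s y" by simp
          moreover have "s p \<noteq> s y" using p permutes_inj[OF perm] by (metis injD)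
          ultimately show ?thesis using a1 a2 by simp
        next
          case spl: False
          show ?thesis
          proof (cases "Suc p = y")
            case True
            have a1: "?D p = s p" using Dapp[of p] pl p below_l[of p] True yl by (simp add: transpose_def)
            have a2: "?D (Suc p) = t" using True c3 by simp
            show ?thesis using a1 a2 p True syt' by simp
          next
            case False
            have a1: "?D p = ?Dl p" using Dapp[of p] pl p by (simp add: transpose_def)
            have a2: "?D (Suc p) = ?Dl (Suc p)" using Dapp[of "Suc p"] spl False by (simp add: transpose_def)
            show ?thesis using a1 a2 ksl(9) p pl by simp
          qed
        qed
      qed
    qed
    show ?thesis unfolding chain_props_def gc
      using c1 c2 c3 c4 c5 c6 c7 by simp
  qed
qed


definition colproc :: "nat \<Rightarrow> (nat \<Rightarrow> nat) \<Rightarrow> (nat \<Rightarrow> nat \<Rightarrow> nat) \<Rightarrow> nat \<Rightarrow> (nat \<Rightarrow> nat) \<Rightarrow> nat \<Rightarrow> nat" where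
  "colproc n lam T H s = fold (\<lambda>i s. greedy_step n lam T s (H, i)) (rev [1..<Suc (col_len n lam H)]) s"

definition CLs :: "nat \<Rightarrow> (nat \<Rightarrow> nat) \<Rightarrow> nat \<Rightarrow> nat set" where
  "CLs n lam H = {col_len n lam h | h. 1 \<le> h \<and> h \<le> H}"

definition Jinv :: "nat \<Rightarrow> (nat \<Rightarrow> nat) \<Rightarrow> (nat \<Rightarrow> nat \<Rightarrow> nat) \<Rightarrow> nat \<Rightarrow> (nat \<Rightarrow> nat) \<Rightarrow> nat \<Rightarrow> (nat \<Rightarrow> nat) \<Rightarrow> bool" where
  "Jinv n lam T H s0 i s \<longleftrightarrow> s permutes {1..n} \<and>
     (\<forall>q. 1 \<le> q \<and> q \<le> i \<longrightarrow> s q = T H q) \<and>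
     (\<forall>q. i < q \<and> q \<le> col_len n lam (Suc H) \<longrightarrow> s q = T (Suc H) q) \<and>
     (\<forall>p. col_len n lam (Suc H) < p \<and> Suc p \<le> n \<and> p \<notin> CLs n lam H \<longrightarrow> s p < s (Suc p)) \<and>
     (\<forall>h. 1 \<le> h \<and> h \<le> H \<longrightarrow>
        PhiM (T (Suc H)) (s ` {1..col_len n lam h}) i = PhiM (T (Suc H)) (s0 ` {1..col_len n lam h}) (col_len n lam (Suc H)))"

definition Inv :: "nat \<Rightarrow> (nat \<Rightarrow> nat) \<Rightarrow> (nat \<Rightarrow> nat \<Rightarrow> nat) \<Rightarrow> nat \<Rightarrow> (nat \<Rightarrow> nat) \<Rightarrow> bool" where
  "Inv n lam T H s \<longleftrightarrow> s permutes {1..n} \<and>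
     (\<forall>q. 1 \<le> q \<and> q \<le> col_len n lam H \<longrightarrow> s q = T H q) \<and>
     (\<forall>p. col_len n lam H < p \<and> Suc p \<le> n \<and> p \<notin> CLs n lam H \<longrightarrow> s p < s (Suc p)) \<and>
     (\<forall>h. 1 \<le> h \<and> h \<le> H \<longrightarrow> s ` {1..col_len n lam h} = set (sends n lam T H h)
        \<and> sorted_wrt (>) (rev (sends n lam T H h)))"

context
  fixes n :: nat and lam :: "nat \<Rightarrow> nat" and T :: "nat \<Rightarrow> nat \<Rightarrow> nat"
  assumes part: "is_partition n lam" and ss: "semistandard n lam T"
begin

abbreviation cl where "cl j \<equiv> col_len n lam j"

lemma T_range: "1 \<le> j \<Longrightarrow> 1 \<le> i \<Longrightarrow> i \<le> cl j \<Longrightarrow> 1 \<le> T j i \<and> T j i \<le> n"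
  using ss in_shape_iff[OF part] unfolding semistandard_def by blast

lemma T_col_Suc: "1 \<le> j \<Longrightarrow> 1 \<le> i \<Longrightarrow> Suc i \<le> cl j \<Longrightarrow> T j i < T j (Suc i)"
  using ss in_shape_iff[OF part] unfolding semistandard_def by auto

lemma T_col: "1 \<le> j \<Longrightarrow> 1 \<le> i \<Longrightarrow> i < i' \<Longrightarrow> i' \<le> cl j \<Longrightarrow> T j i < T j i'"
proof (induction i')
  case 0 then show ?case by simp
next
  case (Suc i')
  show ?case
  proof (cases "i = i'")
    case True then show ?thesis using T_col_Suc Suc.prems by simp
  next
    case False
    then have "T j i < T j i'" using Suc by simp
    also have "T j i' < T j (Suc i')" using T_col_Suc[of j i'] Suc.prems False by simp
    finally show ?thesis .
  qed
qed

lemma T_incr: "1 \<le> j \<Longrightarrow> incr_upto (T j) (cl j)"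
  unfolding incr_upto_def using T_col by blast

lemma T_row: "1 \<le> j \<Longrightarrow> 1 \<le> i \<Longrightarrow> i \<le> cl (Suc j) \<Longrightarrow> T j i \<le> T (Suc j) i"
proof -
  assume a: "1 \<le> j" "1 \<le> i" "i \<le> cl (Suc j)"
  have "cl (Suc j) \<le> cl j" using col_len_mono[OF part] by simp
  then have "in_shape n lam j i" "in_shape n lam (Suc j) i" using a in_shape_iff[OF part] by auto
  then show ?thesis using ss unfolding semistandard_def by blast
qed

lemma T_inj: "1 \<le> j \<Longrightarrow> inj_on (T j) {1..cl j}"
proof (rule inj_onI)
  fix x y assume j: "1 \<le> j" and x: "x \<in> {1..cl j}" and y: "y \<in> {1..cl j}" and e: "T j x = T j y"
  show "x = y"
  proof (rule ccontr)
    assume "x \<noteq> y"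
    then consider "x < y" | "y < x" by linarith
    then show False
    proof cases
      case 1 then show False using T_col[OF j, of x y] x y e by simp
    next
      case 2 then show False using T_col[OF j, of y x] x y e by simp
    qed
  qed
qed

lemma n_pos': "1 \<le> n" using n_pos[OF part] .

lemma pi_init_props:
  shows "pi_init n lam T permutes {1..n}"
    and "\<And>i. 1 \<le> i \<Longrightarrow> i \<le> cl 1 \<Longrightarrow> pi_init n lam T i = T 1 i"
    and "\<And>p. cl 1 < p \<Longrightarrow> Suc p \<le> n \<Longrightarrow> pi_init n lam T p < pi_init n lam T (Suc p)"
proof -
  define c where "c = cl 1"
  let ?c = "c"
  let ?A = "T 1 ` {1..?c}"
  let ?rest = "sorted_list_of_set ({1..n} - ?A)"
  let ?s = "pi_init n lam T"
  have cn: "?c < n" using col_len_lt[OF part] unfolding c_def by simp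
  have Asub: "?A \<subseteq> {1..n}" using T_range[of 1] unfolding c_def by auto
  have cardA: "card ?A = ?c" using card_image[OF T_inj[of 1]] unfolding c_def by simp
  have len: "length ?rest = n - ?c"
    using cardA Asub by (simp add: card_Diff_subset finite_subset)
  have srt: "sorted_wrt (<) ?rest" by simp
  have setr: "set ?rest = {1..n} - ?A" by simp
  have s_def: "\<And>p. ?s p = (if p < 1 \<or> n < p then p else if p \<le> ?c then T 1 p else ?rest ! (p - ?c - 1))"
    unfolding pi_init_def Let_def c_def by simp
  show "\<And>i. 1 \<le> i \<Longrightarrow> i \<le> cl 1 \<Longrightarrow> ?s i = T 1 i" using s_def cn unfolding c_def by simp
  show "\<And>p. cl 1 < p \<Longrightarrow> Suc p \<le> n \<Longrightarrow> ?s p < ?s (Suc p)"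
  proof -
    fix p assume p0: "cl 1 < p" "Suc p \<le> n"
    then have p: "?c < p" "Suc p \<le> n" unfolding c_def by simp_all
    have "?rest ! (p - ?c - 1) < ?rest ! (Suc p - ?c - 1)"
      using sorted_wrt_nth_less[OF srt, of "p - ?c - 1" "Suc p - ?c - 1"] p len by simp
    then show "?s p < ?s (Suc p)" using s_def p by simp
  qed
  have img: "?s ` {1..n} = {1..n}"
  proof
    show "?s ` {1..n} \<subseteq> {1..n}"
    proof
      fix y assume "y \<in> ?s ` {1..n}"
      then obtain p where p: "p \<in> {1..n}" "y = ?s p" by auto
      show "y \<in> {1..n}"
      proof (cases "p \<le> ?c")
        case True then show ?thesis using p s_def T_range[of 1 p] unfolding c_def by auto
      next
        case False
        then have "p - ?c - 1 < length ?rest" using p len by auto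
        then have "?rest ! (p - ?c - 1) \<in> set ?rest" by (rule nth_mem)
        then have "?rest ! (p - ?c - 1) \<in> {1..n}" using setr by blast
        moreover have "?s p = ?rest ! (p - ?c - 1)" using s_def p False by simp
        ultimately show ?thesis using p by simp
      qed
    qed
    show "{1..n} \<subseteq> ?s ` {1..n}"
    proof
      fix y assume y: "y \<in> {1..n}"
      show "y \<in> ?s ` {1..n}"
      proof (cases "y \<in> ?A")
        case True
        then obtain i where i: "i \<in> {1..?c}" "y = T 1 i" by auto
        then have "?s i = y" using s_def cn by simp
        moreover have "i \<in> {1..n}" using i cn by simp
        ultimately show ?thesis by force
      next
        case False
        then have "y \<in> set ?rest" using setr y by simp
        then obtain k where k: "k < length ?rest" "?rest ! k = y" by (metis in_set_conv_nth)
        let ?p = "k + ?c + 1"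
        have pn: "\<not> (?p < 1 \<or> n < ?p)" "\<not> ?p \<le> c" using k len by auto
        have "?s ?p = ?rest ! (?p - c - 1)" using s_def[of ?p] pn by presburger
        then have "?s ?p = y" using k by simp
        moreover have "?p \<in> {1..n}" using k len by simp
        ultimately show ?thesis by force
      qed
    qed
  qed
  have "inj_on ?s {1..n}" using img by (simp add: eq_card_imp_inj_on)
  then have "bij_betw ?s {1..n} {1..n}" using img by (simp add: bij_betw_def)
  then show "?s permutes {1..n}"
  proof (rule bij_imp_permutes)
    fix x assume "x \<notin> {1..n}"
    then have "x < 1 \<or> n < x" by auto
    then show "?s x = x" using s_def[of x] by presburger
  qed
qed


lemma row_step:
  assumes H1: "1 \<le> H" and HL: "Suc H \<le> lam 1" and i1: "1 \<le> i" and ic: "i \<le> cl (Suc H)"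
    and J: "Jinv n lam T H s0 i s"
  shows "Jinv n lam T H s0 (i - 1) (greedy_step n lam T s (Suc H, i))"
proof -
  let ?c = "cl (Suc H)"
  let ?t = "T (Suc H) i"
  let ?a = "T H i"
  have perm: "s permutes {1..n}" and Ja: "\<forall>q. 1 \<le> q \<and> q \<le> i \<longrightarrow> s q = T H q"
    and Jb: "\<forall>q. i < q \<and> q \<le> ?c \<longrightarrow> s q = T (Suc H) q"
    and J3: "\<forall>p. ?c < p \<and> Suc p \<le> n \<and> p \<notin> CLs n lam H \<longrightarrow> s p < s (Suc p)"
    and J4: "\<forall>h. 1 \<le> h \<and> h \<le> H \<longrightarrow>
        PhiM (T (Suc H)) (s ` {1..cl h}) i = PhiM (T (Suc H)) (s0 ` {1..cl h}) ?c"
    using J unfolding Jinv_def by blast+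
  have cn: "?c < n" using col_len_lt[OF part] by simp
  have cH: "?c \<le> cl H" using col_len_mono[OF part] by simp
  have clh: "\<And>h. h \<le> H \<Longrightarrow> ?c \<le> cl h" using col_len_mono[OF part] by (meson le_SucI)
  have si: "s i = ?a" using Ja i1 by simp
  have at: "?a \<le> ?t" using T_row[OF H1 i1 ic] .
  have gs: "greedy_step n lam T s (Suc H, i) =
      (if ?a = ?t then s else cyc_update s (greedy_chain n s ?c ?t i n))"
    unfolding greedy_step_def Let_def by simp
  show ?thesis
  proof (cases "?a = ?t")
    case True
    have g: "greedy_step n lam T s (Suc H, i) = s" using gs True by simp
    show ?thesis unfolding g Jinv_def
    proof (intro conjI)
      show "s permutes {1..n}" using perm .
      show "\<forall>q. 1 \<le> q \<and> q \<le> i - 1 \<longrightarrow> s q = T H q" using Ja by auto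
      show "\<forall>q. i - 1 < q \<and> q \<le> ?c \<longrightarrow> s q = T (Suc H) q"
      proof (intro allI impI)
        fix q assume q: "i - 1 < q \<and> q \<le> ?c"
        show "s q = T (Suc H) q"
        proof (cases "q = i")
          case True then show ?thesis using si \<open>?a = ?t\<close> by simp
        next
          case False then show ?thesis using Jb q by auto
        qed
      qed
      show "\<forall>p. ?c < p \<and> Suc p \<le> n \<and> p \<notin> CLs n lam H \<longrightarrow> s p < s (Suc p)" using J3 .
      show "\<forall>h. 1 \<le> h \<and> h \<le> H \<longrightarrow>
        PhiM (T (Suc H)) (s ` {1..cl h}) (i - 1) = PhiM (T (Suc H)) (s0 ` {1..cl h}) ?c"
      proof (intro allI impI)
        fix h assume h: "1 \<le> h \<and> h \<le> H"
        have "?t \<in> s ` {1..cl h}" using si True i1 ic clh[of h] h by force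
        then have "phi ?t (s ` {1..cl h}) = s ` {1..cl h}" unfolding phi_def by simp
        then have "PhiM (T (Suc H)) (s ` {1..cl h}) i = PhiM (T (Suc H)) (s ` {1..cl h}) (i - 1)"
          using i1 by (cases i) auto
        then show "PhiM (T (Suc H)) (s ` {1..cl h}) (i - 1) = PhiM (T (Suc H)) (s0 ` {1..cl h}) ?c"
          using J4 h by simp
      qed
    qed
  next
    case False
    then have alt: "?a < ?t" using at by simp
    let ?ks = "greedy_chain n s ?c ?t i n"
    let ?D = "cyc_update s ?ks"
    have g: "greedy_step n lam T s (Suc H, i) = ?D" using gs False by simp
    have trange: "?t \<in> {1..n}" using T_range[of "Suc H" i] i1 ic by simp
    obtain qt where qt: "qt \<in> {1..n}" "s qt = ?t"
      using trange permutes_image[OF perm] by (metis imageE)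
    have qtc: "?c < qt"
    proof (rule ccontr)
      assume "\<not> ?c < qt"
      then have qc: "qt \<le> ?c" by simp
      show False
      proof (cases "qt \<le> i")
        case True
        then have "s qt = T H qt" using Ja qt by simp
        moreover have "T H qt \<le> ?a"
        proof (cases "qt = i")
          case False
          then show ?thesis using T_col[OF H1, of qt i] qt True ic cH by simp
        qed simp
        ultimately show False using qt alt by simp
      next
        case False
        then have "s qt = T (Suc H) qt" using Jb qc by simp
        moreover have "?t < T (Suc H) qt" using T_col[of "Suc H" i qt] i1 False qc by simp
        ultimately show False using qt by simp
      qed
    qed
    have Out: "\<forall>q. 1 \<le> q \<and> q \<le> ?c \<and> q \<noteq> i \<longrightarrow> s q < s i \<or> ?t < s q"
    proof (intro allI impI)
      fix q assume q: "1 \<le> q \<and> q \<le> ?c \<and> q \<noteq> i"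
      show "s q < s i \<or> ?t < s q"
      proof (cases "q < i")
        case True
        then have "s q = T H q" using Ja q by simp
        moreover have "T H q < T H i" using T_col[OF H1, of q i] q True ic cH by simp
        ultimately show ?thesis using si by simp
      next
        case False
        then have "i < q" using q by simp
        then have "s q = T (Suc H) q" using Jb q by simp
        moreover have "?t < T (Suc H) q" using T_col[of "Suc H" i q] i1 \<open>i < q\<close> q by simp
        ultimately show ?thesis by simp
      qed
    qed
    have fuel: "card {q. ?c < q \<and> q \<le> n \<and> s i < s q \<and> s q \<le> ?t} \<le> n"
    proof -
      have "card {q. ?c < q \<and> q \<le> n \<and> s i < s q \<and> s q \<le> ?t} \<le> card {1..n}"
        by (intro card_mono) auto
      then show ?thesis by simp
    qed
    have CP: "chain_props n s ?c ?t i ?ks"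
      using chain_main[OF perm qtc _ qt(2), of i n] qt i1 ic cn si alt Out fuel by simp
    have ks: "?ks \<noteq> []" "hd ?ks = i" "set (tl ?ks) \<subseteq> {q. i < q \<and> ?c < q \<and> q \<le> n}"
      "\<forall>q. q \<notin> set ?ks \<longrightarrow> ?D q = s q" "?D i = ?t" "?D permutes {1..n}"
      "\<forall>K. ?c \<le> K \<and> i \<le> K \<longrightarrow> ?D ` {1..K} =
        (if ?t \<in> s ` {1..K} then s ` {1..K}
         else insert ?t (s ` {1..K} - {Max {z \<in> s ` {1..K}. s i \<le> z \<and> z \<le> ?t}}))"
      "\<forall>p. ?c < p \<and> Suc p \<le> n \<and> p \<noteq> i \<and> s p < s (Suc p) \<longrightarrow> ?D p < ?D (Suc p)"
      using CP unfolding chain_props_def by blast+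
    have low: "\<And>q. q \<le> ?c \<Longrightarrow> q \<noteq> i \<Longrightarrow> ?D q = s q"
    proof -
      fix q assume q: "q \<le> ?c" "q \<noteq> i"
      have "q \<notin> set ?ks"
      proof
        assume "q \<in> set ?ks"
        then have "q = hd ?ks \<or> q \<in> set (tl ?ks)" using ks(1) by (cases ?ks) auto
        then show False using ks(2,3) q by auto
      qed
      then show "?D q = s q" using ks(4) by simp
    qed
    show ?thesis unfolding g Jinv_def
    proof (intro conjI)
      show "?D permutes {1..n}" using ks(6) .
      show "\<forall>q. 1 \<le> q \<and> q \<le> i - 1 \<longrightarrow> ?D q = T H q" using Ja low ic by auto
      show "\<forall>q. i - 1 < q \<and> q \<le> ?c \<longrightarrow> ?D q = T (Suc H) q"
      proof (intro allI impI)
        fix q assume q: "i - 1 < q \<and> q \<le> ?c"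
        show "?D q = T (Suc H) q"
        proof (cases "q = i")
          case True then show ?thesis using ks(5) by simp
        next
          case False then show ?thesis using Jb q low by auto
        qed
      qed
      show "\<forall>p. ?c < p \<and> Suc p \<le> n \<and> p \<notin> CLs n lam H \<longrightarrow> ?D p < ?D (Suc p)"
        using J3 ks(8) ic by auto
      show "\<forall>h. 1 \<le> h \<and> h \<le> H \<longrightarrow>
        PhiM (T (Suc H)) (?D ` {1..cl h}) (i - 1) = PhiM (T (Suc H)) (s0 ` {1..cl h}) ?c"
      proof (intro allI impI)
        fix h assume h: "1 \<le> h \<and> h \<le> H"
        let ?P = "s ` {1..cl h}"
        have K: "?c \<le> cl h" "i \<le> cl h" using clh[of h] h ic by auto
        have siP: "s i \<in> ?P" using i1 K by auto
        have mx: "Max {z \<in> ?P. s i \<le> z \<and> z \<le> ?t} = Max {y \<in> ?P. y \<le> ?t}"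
          using Max_shift[of ?P "s i" 0 ?t] siP si alt by simp
        have "?D ` {1..cl h} = phi ?t ?P"
          using ks(7) K mx unfolding phi_def by simp
        moreover have "PhiM (T (Suc H)) ?P i = PhiM (T (Suc H)) (phi ?t ?P) (i - 1)"
          using i1 by (cases i) auto
        ultimately show "PhiM (T (Suc H)) (?D ` {1..cl h}) (i - 1) = PhiM (T (Suc H)) (s0 ` {1..cl h}) ?c"
          using J4 h by simp
      qed
    qed
  qed
qed


lemma rows_fold:
  assumes H1: "1 \<le> H" and HL: "Suc H \<le> lam 1"
  shows "i \<le> cl (Suc H) \<Longrightarrow> Jinv n lam T H s0 i s \<Longrightarrow>
    Jinv n lam T H s0 0 (fold (\<lambda>i s. greedy_step n lam T s (Suc H, i)) (rev [1..<Suc i]) s)"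
proof (induction i arbitrary: s)
  case 0 then show ?case by simp
next
  case (Suc i)
  have "Jinv n lam T H s0 (Suc i - 1) (greedy_step n lam T s (Suc H, Suc i))"
    using row_step[OF H1 HL _ Suc.prems(1) Suc.prems(2)] by simp
  then have "Jinv n lam T H s0 0 (fold (\<lambda>i s. greedy_step n lam T s (Suc H, i)) (rev [1..<Suc i]) (greedy_step n lam T s (Suc H, Suc i)))"
    using Suc.IH Suc.prems(1) by simp
  then show ?case by simp
qed

lemma base_sorted: "1 \<le> j \<Longrightarrow> sorted_wrt (>) (rev (sends n lam T j j))"
proof -
  assume j: "1 \<le> j"
  have "sorted_wrt (<) (map (T j) [1..<Suc (cl j)])"
  proof (rule sorted_wrt_map_mono[of "(<)"])
    show "sorted_wrt (<) [1..<Suc (cl j)]" by (rule sorted_wrt_upt)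
    fix x y assume xy: "x \<in> set [1..<Suc (cl j)]" "y \<in> set [1..<Suc (cl j)]" "x < y"
    then have "x \<in> {1..<Suc (cl j)}" "y \<in> {1..<Suc (cl j)}" by (simp_all only: set_upt)
    then show "T j x < T j y" using T_col[OF j, of x y] xy(3) by simp
  qed
  then show ?thesis unfolding sends_base sorted_wrt_rev by simp
qed

lemma incr_upto_mono: "incr_upto a m \<Longrightarrow> m' \<le> m \<Longrightarrow> incr_upto a m'"
  unfolding incr_upto_def by (meson le_trans)

lemma col_step:
  assumes H1: "1 \<le> H" and HL: "Suc H \<le> lam 1" and I: "Inv n lam T H s0"
  shows "Inv n lam T (Suc H) (colproc n lam T (Suc H) s0)"
proof -
  let ?c = "cl (Suc H)"
  let ?s = "colproc n lam T (Suc H) s0"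
  have perm: "s0 permutes {1..n}" and I2: "\<forall>q. 1 \<le> q \<and> q \<le> cl H \<longrightarrow> s0 q = T H q"
    and I3: "\<forall>p. cl H < p \<and> Suc p \<le> n \<and> p \<notin> CLs n lam H \<longrightarrow> s0 p < s0 (Suc p)"
    and I4: "\<forall>h. 1 \<le> h \<and> h \<le> H \<longrightarrow> s0 ` {1..cl h} = set (sends n lam T H h)
        \<and> sorted_wrt (>) (rev (sends n lam T H h))"
    using I unfolding Inv_def by blast+
  have cH: "?c \<le> cl H" using col_len_mono[OF part] by simp
  have clh: "\<And>h. h \<le> H \<Longrightarrow> ?c \<le> cl h" using col_len_mono[OF part] by (meson le_SucI)
  have HCL: "cl H \<in> CLs n lam H" unfolding CLs_def using H1 by blast
  have J0: "Jinv n lam T H s0 ?c s0"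
    unfolding Jinv_def
  proof (intro conjI)
    show "s0 permutes {1..n}" using perm .
    show "\<forall>q. 1 \<le> q \<and> q \<le> ?c \<longrightarrow> s0 q = T H q" using I2 cH by auto
    show "\<forall>q. ?c < q \<and> q \<le> ?c \<longrightarrow> s0 q = T (Suc H) q" by auto
    show "\<forall>p. ?c < p \<and> Suc p \<le> n \<and> p \<notin> CLs n lam H \<longrightarrow> s0 p < s0 (Suc p)"
    proof (intro allI impI)
      fix p assume p: "?c < p \<and> Suc p \<le> n \<and> p \<notin> CLs n lam H"
      show "s0 p < s0 (Suc p)"
      proof (cases "cl H < p")
        case True then show ?thesis using I3 p by simp
      next
        case False
        then have "p \<noteq> cl H" using p HCL by auto
        then have "Suc p \<le> cl H" using False by simp
        then have "s0 p = T H p" "s0 (Suc p) = T H (Suc p)" using I2 p by auto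
        moreover have "T H p < T H (Suc p)" using T_col_Suc[OF H1, of p] p \<open>Suc p \<le> cl H\<close> by simp
        ultimately show ?thesis by simp
      qed
    qed
    show "\<forall>h. 1 \<le> h \<and> h \<le> H \<longrightarrow>
        PhiM (T (Suc H)) (s0 ` {1..cl h}) ?c = PhiM (T (Suc H)) (s0 ` {1..cl h}) ?c" by simp
  qed
  have J: "Jinv n lam T H s0 0 ?s"
    unfolding colproc_def using rows_fold[OF H1 HL order_refl J0] .
  have Jp: "?s permutes {1..n}" and Jb: "\<forall>q. 0 < q \<and> q \<le> ?c \<longrightarrow> ?s q = T (Suc H) q"
    and J3: "\<forall>p. ?c < p \<and> Suc p \<le> n \<and> p \<notin> CLs n lam H \<longrightarrow> ?s p < ?s (Suc p)"
    and J4: "\<forall>h. 1 \<le> h \<and> h \<le> H \<longrightarrow>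
        PhiM (T (Suc H)) (?s ` {1..cl h}) 0 = PhiM (T (Suc H)) (s0 ` {1..cl h}) ?c"
    using J unfolding Jinv_def by blast+
  have incS: "incr_upto (T (Suc H)) ?c" using T_incr[of "Suc H"] by simp
  have incH: "incr_upto (T H) ?c" using incr_upto_mono[OF T_incr[OF H1] cH] .
  show ?thesis
    unfolding Inv_def
  proof (intro conjI)
    show "?s permutes {1..n}" using Jp .
    show "\<forall>q. 1 \<le> q \<and> q \<le> ?c \<longrightarrow> ?s q = T (Suc H) q" using Jb by auto
    show "\<forall>p. ?c < p \<and> Suc p \<le> n \<and> p \<notin> CLs n lam (Suc H) \<longrightarrow> ?s p < ?s (Suc p)"
    proof (intro allI impI)
      fix p assume p: "?c < p \<and> Suc p \<le> n \<and> p \<notin> CLs n lam (Suc H)"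
      have "CLs n lam H \<subseteq> CLs n lam (Suc H)" unfolding CLs_def by force
      then show "?s p < ?s (Suc p)" using J3 p by blast
    qed
    show "\<forall>h. 1 \<le> h \<and> h \<le> Suc H \<longrightarrow> ?s ` {1..cl h} = set (sends n lam T (Suc H) h)
        \<and> sorted_wrt (>) (rev (sends n lam T (Suc H) h))"
    proof (intro allI impI)
      fix h assume h: "1 \<le> h \<and> h \<le> Suc H"
      show "?s ` {1..cl h} = set (sends n lam T (Suc H) h) \<and> sorted_wrt (>) (rev (sends n lam T (Suc H) h))"
      proof (cases "h = Suc H")
        case True
        have "?s ` {1..?c} = T (Suc H) ` {1..?c}" using Jb by (intro image_cong) auto
        then have "?s ` {1..?c} = set (sends n lam T (Suc H) (Suc H))" unfolding sends_base by auto
        then show ?thesis using True base_sorted[of "Suc H"] by simp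
      next
        case False
        then have hH: "1 \<le> h" "h \<le> H" using h by auto
        have e0: "s0 ` {1..cl h} = set (sends n lam T H h)" and srt: "sorted_wrt (>) (rev (sends n lam T H h))"
          using I4 hH by auto
        have cond: "condA (T H) (T (Suc H)) (set (rev (sends n lam T H h))) ?c"
          unfolding condA_def
        proof
          fix i assume i: "i \<in> {1..?c}"
          have "s0 i = T H i" using I2 i cH by auto
          moreover have "i \<in> {1..cl h}" using i clh[of h] hH by auto
          ultimately have "T H i \<in> set (sends n lam T H h)" using e0 by force
          moreover have "T H i \<le> T (Suc H) i" using T_row[OF H1, of i] i by simp
          ultimately show "T H i \<in> set (rev (sends n lam T H h)) \<and> T H i \<le> T (Suc H) i" by simp
        qed
        have st: "sends n lam T (Suc H) h = rev (fptr (T (Suc H)) (rev (sends n lam T H h)) ?c)"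
          using sends_step[where n=n and lam=lam and T=T and H=H and j=h, OF hH(2) incS] .
        have "set (sends n lam T (Suc H) h) = PhiM (T (Suc H)) (set (sends n lam T H h)) ?c"
          using fptr_Phi[OF srt incS incH cond] st by simp
        also have "\<dots> = ?s ` {1..cl h}" using J4 hH e0 by simp
        finally have e1: "?s ` {1..cl h} = set (sends n lam T (Suc H) h)" by simp
        have "sorted_wrt (>) (rev (sends n lam T (Suc H) h))"
          using st fptr_sorted[OF srt incS] by simp
        then show ?thesis using e1 by simp
      qed
    qed
  qed
qed

lemma Inv_init:
  assumes "1 \<le> lam 1"
  shows "Inv n lam T 1 (pi_init n lam T)"
  unfolding Inv_def
proof (intro conjI)
  show "pi_init n lam T permutes {1..n}" using pi_init_props(1) .
  show "\<forall>q. 1 \<le> q \<and> q \<le> cl 1 \<longrightarrow> pi_init n lam T q = T 1 q" using pi_init_props(2) by auto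
  show "\<forall>p. cl 1 < p \<and> Suc p \<le> n \<and> p \<notin> CLs n lam 1 \<longrightarrow> pi_init n lam T p < pi_init n lam T (Suc p)"
    using pi_init_props(3) by auto
  show "\<forall>h. 1 \<le> h \<and> h \<le> 1 \<longrightarrow> pi_init n lam T ` {1..cl h} = set (sends n lam T 1 h)
        \<and> sorted_wrt (>) (rev (sends n lam T 1 h))"
  proof (intro allI impI)
    fix h :: nat assume "1 \<le> h \<and> h \<le> 1"
    then have h: "h = 1" by simp
    have "pi_init n lam T ` {1..cl 1} = T 1 ` {1..cl 1}" using pi_init_props(2) by (intro image_cong) auto
    then show "pi_init n lam T ` {1..cl h} = set (sends n lam T 1 h) \<and> sorted_wrt (>) (rev (sends n lam T 1 h))"
      unfolding h using base_sorted[of 1] unfolding sends_base by auto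
  qed
qed

definition sigma :: "nat \<Rightarrow> nat \<Rightarrow> nat" where
  "sigma H = fold (\<lambda>H s. colproc n lam T H s) [2..<Suc H] (pi_init n lam T)"

lemma Inv_sigma: "1 \<le> H \<Longrightarrow> H \<le> lam 1 \<Longrightarrow> Inv n lam T H (sigma H)"
proof (induction H)
  case 0 then show ?case by simp
next
  case (Suc H)
  show ?case
  proof (cases "H = 0")
    case True
    then show ?thesis using Inv_init Suc.prems unfolding sigma_def by simp
  next
    case False
    then have H1: "1 \<le> H" by simp
    have "Inv n lam T H (sigma H)" using Suc.IH H1 Suc.prems by simp
    then have "Inv n lam T (Suc H) (colproc n lam T (Suc H) (sigma H))" using col_step[OF H1 Suc.prems(2)] by simp
    moreover have "sigma (Suc H) = colproc n lam T (Suc H) (sigma H)"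
      unfolding sigma_def using H1 by simp
    ultimately show ?thesis by simp
  qed
qed

lemma fold_concat: "fold f (concat xss) s = fold (\<lambda>xs. fold f xs) xss s"
  by (induction xss arbitrary: s) auto

lemma pi_T_sigma: "pi_T n lam T = sigma (lam 1)"
proof -
  let ?g = "\<lambda>loc pi. greedy_step n lam T pi loc"
  let ?F = "\<lambda>j. map (\<lambda>i. (j, i)) (rev [1..<Suc (cl j)])"
  have e: "(\<lambda>xs. fold ?g xs) \<circ> ?F = (\<lambda>H s. colproc n lam T H s)"
    by (rule ext, rule ext, simp add: colproc_def fold_map comp_def)
  have "pi_T n lam T = fold (\<lambda>xs. fold ?g xs) (map ?F [2..<Suc (lam 1)]) (pi_init n lam T)"
    unfolding pi_T_def greedy_locs_def fold_concat ..
  also have "\<dots> = fold ((\<lambda>xs. fold ?g xs) \<circ> ?F) [2..<Suc (lam 1)] (pi_init n lam T)"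
    unfolding fold_map ..
  also have "\<dots> = sigma (lam 1)" unfolding e sigma_def ..
  finally show ?thesis .
qed

end


lemma strict_sorted_slos:
  fixes xs :: "nat list"
  assumes "sorted_wrt (>) (rev xs)"
  shows "sort xs = sorted_list_of_set (set xs)"
proof -
  have s: "sorted_wrt (<) xs" using assms unfolding sorted_wrt_rev by simp
  then have "sorted xs" "distinct xs" by (auto simp: strict_sorted_iff)
  then show ?thesis by (simp add: sorted_list_of_set_sort_remdups distinct_remdups_id sorted_sort_id)
qed

context
  fixes n :: nat and lam :: "nat \<Rightarrow> nat" and T :: "nat \<Rightarrow> nat \<Rightarrow> nat"
  assumes part: "is_partition n lam" and ss: "semistandard n lam T"
begin

lemma L_pos: "1 \<le> lam 1"
proof -
  obtain i where i: "i \<in> {1..n}" "lam i \<noteq> 0" using part unfolding is_partition_def by blast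
  have "lam i \<le> lam 1" using lam_mono[OF part, of 1 i] i by simp
  then show ?thesis using i by simp
qed

lemma Inv_final: "Inv n lam T (lam 1) (pi_T n lam T)"
  using Inv_sigma[OF part ss L_pos order_refl] pi_T_sigma[OF part ss] by simp

lemma RK_eq:
  assumes j: "1 \<le> j" "j \<le> lam 1"
  shows "right_key n lam T j i = sorted_list_of_set (pi_T n lam T ` {1..col_len n lam j}) ! (i - 1)"
proof -
  have I4: "pi_T n lam T ` {1..col_len n lam j} = set (sends n lam T (lam 1) j)"
    "sorted_wrt (>) (rev (sends n lam T (lam 1) j))"
    using Inv_final j unfolding Inv_def by blast+
  show ?thesis unfolding right_key_def scan_ends_sends strict_sorted_slos[OF I4(2)] I4(1) ..
qed

lemma tab_iff:
  assumes wp: "w permutes {1..n}"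
  shows "tab_le n lam (right_key n lam T) (Y_key n lam w) \<longleftrightarrow>
    (\<forall>j x. 1 \<le> j \<and> j \<le> lam 1 \<longrightarrow> N w (col_len n lam j) x \<le> N (pi_T n lam T) (col_len n lam j) x)"
proof -
  let ?p = "pi_T n lam T"
  have pp: "?p permutes {1..n}" using Inv_final unfolding Inv_def by blast
  have colj: "\<And>j. 1 \<le> j \<and> j \<le> lam 1 \<Longrightarrow>
     (\<forall>i. 1 \<le> i \<and> i \<le> col_len n lam j \<longrightarrow> right_key n lam T j i \<le> Y_key n lam w j i) \<longleftrightarrow>
     (\<forall>x. N w (col_len n lam j) x \<le> N ?p (col_len n lam j) x)"
  proof -
    fix j assume j: "1 \<le> j \<and> j \<le> lam 1"
    let ?k = "col_len n lam j"
    let ?A = "?p ` {1..?k}" and ?B = "w ` {1..?k}"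
    have injp: "inj_on ?p {1..?k}" using permutes_inj_on[OF pp] .
    have injw: "inj_on w {1..?k}" using permutes_inj_on[OF wp] .
    have cA: "card ?A = ?k" using card_image[OF injp] by simp
    have cB: "card ?B = ?k" using card_image[OF injw] by simp
    have "(\<forall>i. 1 \<le> i \<and> i \<le> ?k \<longrightarrow> right_key n lam T j i \<le> Y_key n lam w j i) \<longleftrightarrow>
          (\<forall>i < card ?A. sorted_list_of_set ?A ! i \<le> sorted_list_of_set ?B ! i)"
    proof
      assume H: "\<forall>i. 1 \<le> i \<and> i \<le> ?k \<longrightarrow> right_key n lam T j i \<le> Y_key n lam w j i"
      show "\<forall>i < card ?A. sorted_list_of_set ?A ! i \<le> sorted_list_of_set ?B ! i"
      proof (intro allI impI)
        fix i assume "i < card ?A"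
        then have "1 \<le> Suc i \<and> Suc i \<le> ?k" using cA by simp
        then have r: "right_key n lam T j (Suc i) \<le> Y_key n lam w j (Suc i)" using H by blast
        have e: "right_key n lam T j (Suc i) = sorted_list_of_set ?A ! i" using RK_eq[of j "Suc i"] j by simp
        show "sorted_list_of_set ?A ! i \<le> sorted_list_of_set ?B ! i"
          using r e unfolding Y_key_def by simp
      qed
    next
      assume H: "\<forall>i < card ?A. sorted_list_of_set ?A ! i \<le> sorted_list_of_set ?B ! i"
      show "\<forall>i. 1 \<le> i \<and> i \<le> ?k \<longrightarrow> right_key n lam T j i \<le> Y_key n lam w j i"
      proof (intro allI impI)
        fix i assume i: "1 \<le> i \<and> i \<le> ?k"
        then have "i - 1 < card ?A" using cA by (cases i) auto
        moreover have "right_key n lam T j i = sorted_list_of_set ?A ! (i - 1)" using RK_eq[of j i] j by simp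
        ultimately show "right_key n lam T j i \<le> Y_key n lam w j i"
          unfolding Y_key_def using H by simp
      qed
    qed
    also have "\<dots> \<longleftrightarrow> domi ?A ?B" using sorted_le_iff_domi[of ?A ?B] cA cB by simp
    also have "\<dots> \<longleftrightarrow> (\<forall>x. N w ?k x \<le> N ?p ?k x)"
      unfolding domi_def cnt_image[OF injp] cnt_image[OF injw] ..
    finally show "(\<forall>i. 1 \<le> i \<and> i \<le> ?k \<longrightarrow> right_key n lam T j i \<le> Y_key n lam w j i) \<longleftrightarrow>
     (\<forall>x. N w ?k x \<le> N ?p ?k x)" .
  qed
  have "tab_le n lam (right_key n lam T) (Y_key n lam w) \<longleftrightarrow>
    (\<forall>j. 1 \<le> j \<and> j \<le> lam 1 \<longrightarrow> (\<forall>i. 1 \<le> i \<and> i \<le> col_len n lam j \<longrightarrow> right_key n lam T j i \<le> Y_key n lam w j i))"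
  proof
    assume H: "tab_le n lam (right_key n lam T) (Y_key n lam w)"
    show "\<forall>j. 1 \<le> j \<and> j \<le> lam 1 \<longrightarrow> (\<forall>i. 1 \<le> i \<and> i \<le> col_len n lam j \<longrightarrow> right_key n lam T j i \<le> Y_key n lam w j i)"
      using H unfolding tab_le_def in_shape_iff[OF part] by blast
  next
    assume H: "\<forall>j. 1 \<le> j \<and> j \<le> lam 1 \<longrightarrow> (\<forall>i. 1 \<le> i \<and> i \<le> col_len n lam j \<longrightarrow> right_key n lam T j i \<le> Y_key n lam w j i)"
    show "tab_le n lam (right_key n lam T) (Y_key n lam w)"
      unfolding tab_le_def in_shape_iff[OF part]
    proof (intro allI impI)
      fix j i assume ji: "1 \<le> j \<and> 1 \<le> i \<and> i \<le> col_len n lam j"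
      have "j \<le> lam 1"
      proof (rule ccontr)
        assume "\<not> j \<le> lam 1"
        then have "col_len n lam j = 0" using col_len_zero[OF part] by simp
        then show False using ji by simp
      qed
      then show "right_key n lam T j i \<le> Y_key n lam w j i" using H ji by blast
    qed
  qed
  also have "\<dots> \<longleftrightarrow> (\<forall>j x. 1 \<le> j \<and> j \<le> lam 1 \<longrightarrow> N w (col_len n lam j) x \<le> N ?p (col_len n lam j) x)"
    using colj by blast
  finally show ?thesis .
qed

lemma incr_off_pi: "incr_off n lam (pi_T n lam T)"
  unfolding incr_off_def
proof (intro allI impI)
  let ?p = "pi_T n lam T" and ?L = "lam 1"
  fix p assume p: "1 \<le> p \<and> p < n \<and> p \<notin> {col_len n lam j |j. 1 \<le> j \<and> j \<le> lam 1}"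
  have I2: "\<forall>q. 1 \<le> q \<and> q \<le> col_len n lam ?L \<longrightarrow> ?p q = T ?L q"
    and I3: "\<forall>p. col_len n lam ?L < p \<and> Suc p \<le> n \<and> p \<notin> CLs n lam ?L \<longrightarrow> ?p p < ?p (Suc p)"
    using Inv_final unfolding Inv_def by blast+
  have pCL: "p \<notin> CLs n lam ?L" using p unfolding CLs_def by blast
  show "?p p < ?p (Suc p)"
  proof (cases "col_len n lam ?L < p")
    case True then show ?thesis using I3 p pCL by simp
  next
    case False
    have "p \<noteq> col_len n lam ?L" using p L_pos by blast
    then have sp: "Suc p \<le> col_len n lam ?L" using False by simp
    then have "?p p = T ?L p" "?p (Suc p) = T ?L (Suc p)" using I2 p by auto
    moreover have "T ?L p < T ?L (Suc p)" using T_col_Suc[OF part ss L_pos, of p] p sp by simp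
    ultimately show ?thesis by simp
  qed
qed

end

theorem theorem6p2:
  fixes n :: nat and lam :: "nat \<Rightarrow> nat" and T :: "nat \<Rightarrow> nat \<Rightarrow> nat" and w :: "nat \<Rightarrow> nat"
  assumes "0 < n"
    and "is_partition n lam"
    and "semistandard n lam T"
    and "in_S_lambda n lam w"
  shows "T \<in> D_set n lam w \<longleftrightarrow> bruhat_le n (pi_T n lam T) w"
proof -
  let ?p = "pi_T n lam T"
  have part: "is_partition n lam" and ss: "semistandard n lam T" using assms by auto
  have wp: "w permutes {1..n}" using assms(4) unfolding in_S_lambda_def by blast
  have iw: "incr_off n lam w" using assms(4) unfolding in_S_lambda_def incr_off_def by blast
  have pp: "?p permutes {1..n}" using Inv_final[OF part ss] unfolding Inv_def by blast
  have "T \<in> D_set n lam w \<longleftrightarrow>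
      (\<forall>j x. 1 \<le> j \<and> j \<le> lam 1 \<longrightarrow> N w (col_len n lam j) x \<le> N ?p (col_len n lam j) x)"
    unfolding D_set_def using ss tab_iff[OF part ss wp] by simp
  also have "\<dots> \<longleftrightarrow> bruhat_le n ?p w"
  proof
    assume D: "\<forall>j x. 1 \<le> j \<and> j \<le> lam 1 \<longrightarrow> N w (col_len n lam j) x \<le> N ?p (col_len n lam j) x"
    have "\<forall>k x. k \<le> n \<longrightarrow> N w k x \<le> N ?p k x"
      using dom_all[OF pp wp incr_off_pi[OF part ss] iw D] .
    then have "(?p, w) \<in> (bruhat_cover n)\<^sup>*" using ehresmann[OF wp pp] by blast
    then show "bruhat_le n ?p w" unfolding bruhat_le_def using pp wp by simp
  next
    assume "bruhat_le n ?p w"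
    then have "(?p, w) \<in> (bruhat_cover n)\<^sup>*" unfolding bruhat_le_def by simp
    then show "\<forall>j x. 1 \<le> j \<and> j \<le> lam 1 \<longrightarrow> N w (col_len n lam j) x \<le> N ?p (col_len n lam j) x"
      using N_rtrancl by blast
  qed
  finally show ?thesis .
qed


end
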